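(* Let $T_1,T_2$ be two trees. Every minimum and minimal isometric-universal graph for $\{T_1,T_2\}$ is a tree.
   Context: Graphs are finite, simple and undirected. $\mathrm{dist}_G(u,v)$ denotes the number of edges of a shortest $u$–$v$ path in $G$ ($\infty$ if none exists). A subgraph $H$ of $G$ is an isometric subgraph if $\mathrm{dist}_H(u,v)=\mathrm{dist}_G(u,v)$ for all vertices $u,v$ of $H$. A graph $\mathcal U$ is an isometric-universal graph for a family $\mathcal F$ of graphs if every graph of $\mathcal F$ is isomorphic to an isometric subgraph of $\mathcal U$. It is minimum if it has the smallest possible number of vertices among all isometric-universal graphs for $\mathcal F$, and it is minimal if no proper subgraph of $\mathcal U$ is an isometric-universal graph for $\mathcal F$. *)

theory Defs
  imports Main "HOL-Library.Extended_Nat"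
begin

type_synonym 'a graph = "'a set \<times> 'a set set"

definition verts :: "'a graph \<Rightarrow> 'a set" where "verts G = fst G"
definition edges :: "'a graph \<Rightarrow> 'a set set" where "edges G = snd G"

definition graph :: "'a graph \<Rightarrow> bool" where
  "graph G \<longleftrightarrow> finite (verts G) \<and> (\<forall>e\<in>edges G. card e = 2 \<and> e \<subseteq> verts G)"

definition walk :: "'a graph \<Rightarrow> 'a list \<Rightarrow> bool" where
  "walk G xs \<longleftrightarrow> xs \<noteq> [] \<and> set xs \<subseteq> verts G \<and>
     (\<forall>i. Suc i < length xs \<longrightarrow> {xs ! i, xs ! Suc i} \<in> edges G)"

text \<open>Distance: number of edges of a shortest u-v walk (= shortest path); infinity if none.\<close>
definition dist :: "'a graph \<Rightarrow> 'a \<Rightarrow> 'a \<Rightarrow> enat" where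
  "dist G u v = (INF xs \<in> {xs. walk G xs \<and> hd xs = u \<and> last xs = v}. enat (length xs - 1))"

definition connected :: "'a graph \<Rightarrow> bool" where
  "connected G \<longleftrightarrow> (\<forall>u\<in>verts G. \<forall>v\<in>verts G. dist G u v < \<infinity>)"

definition cycle :: "'a graph \<Rightarrow> 'a list \<Rightarrow> bool" where
  "cycle G xs \<longleftrightarrow> walk G xs \<and> length xs \<ge> 3 \<and> distinct xs \<and> {last xs, hd xs} \<in> edges G"

definition tree :: "'a graph \<Rightarrow> bool" where
  "tree G \<longleftrightarrow> graph G \<and> verts G \<noteq> {} \<and> connected G \<and> \<not> (\<exists>xs. cycle G xs)"

definition subgraph :: "'a graph \<Rightarrow> 'a graph \<Rightarrow> bool" where
  "subgraph H G \<longleftrightarrow> graph H \<and> graph G \<and> verts H \<subseteq> verts G \<and> edges H \<subseteq> edges G"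

definition isometric_subgraph :: "'a graph \<Rightarrow> 'a graph \<Rightarrow> bool" where
  "isometric_subgraph H G \<longleftrightarrow> subgraph H G \<and>
     (\<forall>u\<in>verts H. \<forall>v\<in>verts H. dist H u v = dist G u v)"

definition graph_iso :: "'b graph \<Rightarrow> 'a graph \<Rightarrow> ('b \<Rightarrow> 'a) \<Rightarrow> bool" where
  "graph_iso G H f \<longleftrightarrow> bij_betw f (verts G) (verts H) \<and>
     (\<forall>u\<in>verts G. \<forall>v\<in>verts G. {u, v} \<in> edges G \<longleftrightarrow> {f u, f v} \<in> edges H)"

definition isomorphic :: "'b graph \<Rightarrow> 'a graph \<Rightarrow> bool" where
  "isomorphic G H \<longleftrightarrow> (\<exists>f. graph_iso G H f)"

definition isometric_universal :: "'b graph set \<Rightarrow> 'a graph \<Rightarrow> bool" where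
  "isometric_universal F U \<longleftrightarrow> graph U \<and>
     (\<forall>G\<in>F. \<exists>H. isometric_subgraph H U \<and> isomorphic G H)"

text \<open>Minimum: fewest vertices among all isometric-universal graphs. Every finite graph
is isomorphic to one on vertex type nat, so comparing with graphs on nat is comparing
with all finite graphs.\<close>
definition minimum_isometric_universal :: "'b graph set \<Rightarrow> 'a graph \<Rightarrow> bool" where
  "minimum_isometric_universal F U \<longleftrightarrow> isometric_universal F U \<and>
     (\<forall>H :: nat graph. isometric_universal F H \<longrightarrow> card (verts U) \<le> card (verts H))"

definition minimal_isometric_universal :: "'b graph set \<Rightarrow> 'a graph \<Rightarrow> bool" where
  "minimal_isometric_universal F U \<longleftrightarrow> isometric_universal F U \<and>
     \<not> (\<exists>H. subgraph H U \<and> H \<noteq> U \<and> isometric_universal F H)"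

end

theory Submission
  imports Defs
begin

lemma walk_single[simp]: "walk G [x] \<longleftrightarrow> x \<in> verts G"
  by (auto simp: walk_def)

lemma walk_Cons2: "walk G (x # y # xs) \<longleftrightarrow> x \<in> verts G \<and> {x,y} \<in> edges G \<and> walk G (y # xs)"
proof
  assume w: "walk G (x # y # xs)"
  have "{x,y} \<in> edges G" using w unfolding walk_def by (metis One_nat_def Suc_less_eq length_Cons nth_Cons_0 nth_Cons_Suc zero_less_Suc)
  moreover have "\<forall>i. Suc i < length (y # xs) \<longrightarrow> {(y#xs) ! i, (y#xs) ! Suc i} \<in> edges G"
  proof (intro allI impI)
    fix i assume "Suc i < length (y # xs)"
    then have "Suc (Suc i) < length (x # y # xs)" by simp
    then show "{(y#xs) ! i, (y#xs) ! Suc i} \<in> edges G" using w unfolding walk_def by (metis nth_Cons_Suc)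
  qed
  ultimately show "x \<in> verts G \<and> {x,y} \<in> edges G \<and> walk G (y # xs)" using w unfolding walk_def by auto
next
  assume h: "x \<in> verts G \<and> {x,y} \<in> edges G \<and> walk G (y # xs)"
  have "\<forall>i. Suc i < length (x # y # xs) \<longrightarrow> {(x # y#xs) ! i, (x # y#xs) ! Suc i} \<in> edges G"
  proof (intro allI impI)
    fix i assume i: "Suc i < length (x # y # xs)"
    show "{(x # y#xs) ! i, (x # y#xs) ! Suc i} \<in> edges G"
    proof (cases i)
      case 0 then show ?thesis using h by simp
    next
      case (Suc j) then show ?thesis using h i unfolding walk_def by auto
    qed
  qed
  then show "walk G (x # y # xs)" using h unfolding walk_def by auto
qed

lemma walk_ConsD: "walk G (x # xs) \<Longrightarrow> xs \<noteq> [] \<Longrightarrow> walk G xs"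
  by (cases xs) (auto simp: walk_Cons2)

lemma walk_append: "walk G xs \<Longrightarrow> walk G ys \<Longrightarrow> last xs = hd ys \<Longrightarrow> walk G (xs @ tl ys)"
proof (induction xs rule: induct_list012)
  case 1 then show ?case by (simp add: walk_def)
next
  case (2 x) then show ?case by (cases ys) auto
next
  case (3 x y zs)
  then show ?case by (auto simp: walk_Cons2)
qed

lemma walk_rev: "walk G xs \<Longrightarrow> walk G (rev xs)"
proof (induction xs rule: induct_list012)
  case 1 then show ?case by (simp add: walk_def)
next
  case (2 x) then show ?case by simp
next
  case (3 x y zs)
  then have a: "walk G (rev (y # zs))" and e: "{x,y} \<in> edges G" and xv: "x \<in> verts G"
    by (auto simp: walk_Cons2)
  have "walk G [y, x]" using e xv a by (auto simp: walk_Cons2 insert_commute walk_def)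
  then have "walk G (rev (y # zs) @ tl [y, x])" using walk_append[OF a \<open>walk G [y, x]\<close>] by simp
  then show ?case by simp
qed

lemma walk_take: "walk G xs \<Longrightarrow> 0 < k \<Longrightarrow> walk G (take k xs)"
  unfolding walk_def by (auto dest: in_set_takeD)

lemma walk_drop: "walk G xs \<Longrightarrow> k < length xs \<Longrightarrow> walk G (drop k xs)"
  unfolding walk_def by (auto dest: in_set_dropD)

lemma walk_mono: "verts G \<subseteq> verts H \<Longrightarrow> edges G \<subseteq> edges H \<Longrightarrow> walk G xs \<Longrightarrow> walk H xs"
  unfolding walk_def by blast

lemma dist_le: "walk G xs \<Longrightarrow> dist G (hd xs) (last xs) \<le> enat (length xs - 1)"
  unfolding dist_def by (rule INF_lower2[of xs]) auto

lemma dist_obtain: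
  assumes "dist G u v \<noteq> \<infinity>"
  obtains xs where "walk G xs" "hd xs = u" "last xs = v" "dist G u v = enat (length xs - 1)"
proof -
  let ?S = "{xs. walk G xs \<and> hd xs = u \<and> last xs = v}"
  have "?S \<noteq> {}"
  proof
    assume "?S = {}"
    then have "dist G u v = Inf {}" unfolding dist_def by (metis image_empty)
    then have "dist G u v = \<infinity>" by (simp add: Inf_enat_def)
    then show False using assms by simp
  qed
  then obtain xs0 where "xs0 \<in> ?S" by blast
  then have "Inf ((\<lambda>xs. enat (length xs - 1)) ` ?S) \<in> (\<lambda>xs. enat (length xs - 1)) ` ?S"
    by (intro wellorder_InfI) auto
  then obtain xs where "xs \<in> ?S" "Inf ((\<lambda>xs. enat (length xs - 1)) ` ?S) = enat (length xs - 1)" by auto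
  then show ?thesis using that unfolding dist_def by auto
qed

lemma dist_verts: "dist G u v \<noteq> \<infinity> \<Longrightarrow> u \<in> verts G \<and> v \<in> verts G"
  by (erule dist_obtain) (auto simp: walk_def)

lemma dist_self: "u \<in> verts G \<Longrightarrow> dist G u u = 0"
  using dist_le[of G "[u]"] by (metis enat_0 le_zero_eq walk_single list.sel(1) last_ConsL diff_Suc_1 length_Cons list.size(3))

lemma dist_eq_0: "dist G u v = 0 \<Longrightarrow> u = v"
proof -
  assume d: "dist G u v = 0"
  then have "dist G u v \<noteq> \<infinity>" by simp
  then obtain xs where "walk G xs" "hd xs = u" "last xs = v" "dist G u v = enat (length xs - 1)"
    by (rule dist_obtain)
  then show "u = v" using d by (cases xs) (auto simp: zero_enat_def walk_def)
qed

lemma dist_edge: "{u,v} \<in> edges G \<Longrightarrow> graph G \<Longrightarrow> dist G u v \<le> 1"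
proof -
  assume e: "{u,v} \<in> edges G" and g: "graph G"
  then have "u \<in> verts G" "v \<in> verts G" unfolding graph_def by auto
  then have "walk G [u,v]" using e by (simp add: walk_Cons2)
  from dist_le[OF this] show ?thesis by (simp add: one_enat_def)
qed

lemma dist_one: "dist G u v = 1 \<Longrightarrow> {u,v} \<in> edges G"
proof -
  assume d: "dist G u v = 1"
  then have "dist G u v \<noteq> \<infinity>" by simp
  then obtain xs where w: "walk G xs" "hd xs = u" "last xs = v" "dist G u v = enat (length xs - 1)"
    by (rule dist_obtain)
  then have "length xs - 1 = 1" using d by (simp add: one_enat_def)
  moreover have "xs \<noteq> []" using w by (simp add: walk_def)
  ultimately have "length xs = Suc (Suc 0)" by (cases xs) auto
  then obtain a b where "xs = [a,b]" by (auto simp: length_Suc_conv)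
  then show ?thesis using w by (simp add: walk_Cons2)
qed

lemma dist_sym: "dist G u v = dist G v u"
proof -
  have *: "dist G v u \<le> dist G u v" for u v
  proof (cases "dist G u v = \<infinity>")
    case False
    then obtain xs where w: "walk G xs" "hd xs = u" "last xs = v" "dist G u v = enat (length xs - 1)"
      by (metis dist_obtain)
    then have "xs \<noteq> []" by (simp add: walk_def)
    then have "dist G (hd (rev xs)) (last (rev xs)) \<le> enat (length (rev xs) - 1)"
      using dist_le walk_rev w(1) by blast
    then show ?thesis using w \<open>xs \<noteq> []\<close> by (simp add: hd_rev last_rev)
  qed simp
  show ?thesis using *[of u v] *[of v u] by simp
qed

lemma dist_triangle: "dist G u w \<le> dist G u v + dist G v w"
proof (cases "dist G u v = \<infinity> \<or> dist G v w = \<infinity>")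
  case False
  then obtain xs where w1: "walk G xs" "hd xs = u" "last xs = v" "dist G u v = enat (length xs - 1)"
    by (metis dist_obtain)
  from False obtain ys where w2: "walk G ys" "hd ys = v" "last ys = w" "dist G v w = enat (length ys - 1)"
    by (metis dist_obtain)
  have ne: "xs \<noteq> []" "ys \<noteq> []" using w1 w2 by (auto simp: walk_def)
  have "walk G (xs @ tl ys)" by (rule walk_append) (use w1 w2 in auto)
  from dist_le[OF this] have "dist G (hd (xs @ tl ys)) (last (xs @ tl ys)) \<le> enat (length (xs @ tl ys) - 1)" .
  moreover have "hd (xs @ tl ys) = u" using ne w1 by simp
  moreover have "last (xs @ tl ys) = w"
  proof (cases "tl ys = []")
    case True then show ?thesis using ne w1 w2 by (metis append.right_neutral last_ConsL list.collapse)
  next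
    case False then show ?thesis using ne w1 w2 by (metis last_appendR last_tl)
  qed
  moreover have "length (xs @ tl ys) - 1 = (length xs - 1) + (length ys - 1)" using ne
    by (cases xs; cases ys) auto
  ultimately have "dist G u w \<le> enat ((length xs - 1) + (length ys - 1))" by metis
  also have "\<dots> = dist G u v + dist G v w" using w1(4) w2(4) by simp
  finally show ?thesis .
next
  case True then show ?thesis by (elim disjE) simp_all
qed

lemma dist_mono: "verts G \<subseteq> verts H \<Longrightarrow> edges G \<subseteq> edges H \<Longrightarrow> dist H u v \<le> dist G u v"
  unfolding dist_def
proof (rule INF_superset_mono)
  assume "verts G \<subseteq> verts H" "edges G \<subseteq> edges H"
  then show "{xs. walk G xs \<and> hd xs = u \<and> last xs = v} \<subseteq> {xs. walk H xs \<and> hd xs = u \<and> last xs = v}"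
    using walk_mono[of G H] by blast
qed simp

lemma dist_nonexp:
  assumes fv: "\<And>x. x \<in> verts G \<Longrightarrow> f x \<in> verts H"
    and fe: "\<And>x y. {x,y} \<in> edges G \<Longrightarrow> f x = f y \<or> {f x, f y} \<in> edges H"
    and gH: "graph H"
  shows "dist H (f u) (f v) \<le> dist G u v"
proof -
  have "walk G xs \<Longrightarrow> dist H (f (hd xs)) (f (last xs)) \<le> enat (length xs - 1)" for xs
  proof (induction xs rule: induct_list012)
    case 1 then show ?case by (simp add: walk_def)
  next
    case (2 x) then show ?case using fv by (simp add: dist_self zero_enat_def)
  next
    case (3 x y zs)
    then have e: "{x,y} \<in> edges G" and w: "walk G (y # zs)" and xv: "x \<in> verts G" by (auto simp: walk_Cons2)
    have fxv: "f x \<in> verts H" using fv xv by blast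
    have d1: "dist H (f x) (f y) \<le> 1"
    proof (cases "f x = f y")
      case True then show ?thesis using dist_self[OF fxv] by simp
    next
      case False then have "{f x, f y} \<in> edges H" using fe[OF e] by blast
      from dist_edge[OF this gH] show ?thesis .
    qed
    have d2: "dist H (f y) (f (last (y # zs))) \<le> enat (length (y # zs) - 1)"
      using "3.IH"(2)[OF w] by simp
    have "dist H (f x) (f (last (y # zs))) \<le> dist H (f x) (f y) + dist H (f y) (f (last (y # zs)))"
      by (rule dist_triangle)
    also have "\<dots> \<le> 1 + enat (length (y # zs) - 1)" using d1 d2 by (rule add_mono)
    finally have "dist H (f x) (f (last (y # zs))) \<le> 1 + enat (length (y # zs) - 1)" .
    then show ?case by (simp add: one_enat_def)
  qed
  then show ?thesis unfolding dist_def[of G] by (intro INF_greatest) auto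
qed

definition nd :: "'a graph \<Rightarrow> 'a \<Rightarrow> 'a \<Rightarrow> nat" where
  "nd G u v = the_enat (dist G u v)"

lemma conn_dist: "connected G \<Longrightarrow> u \<in> verts G \<Longrightarrow> v \<in> verts G \<Longrightarrow> dist G u v = enat (nd G u v)"
proof -
  assume "connected G" "u \<in> verts G" "v \<in> verts G"
  then have "dist G u v < \<infinity>" unfolding connected_def by blast
  then obtain n where "dist G u v = enat n" using less_infinityE by blast
  then show ?thesis by (simp add: nd_def)
qed

lemma tree_conn: "tree T \<Longrightarrow> connected T" by (simp add: tree_def)
lemma tree_graph: "tree T \<Longrightarrow> graph T" by (simp add: tree_def)

lemma nd_self: "u \<in> verts G \<Longrightarrow> nd G u u = 0"
  by (simp add: nd_def dist_self zero_enat_def)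

lemma nd_0: "connected G \<Longrightarrow> u \<in> verts G \<Longrightarrow> v \<in> verts G \<Longrightarrow> nd G u v = 0 \<Longrightarrow> u = v"
  using conn_dist[of G u v] dist_eq_0[of G u v] by (simp add: zero_enat_def)

lemma nd_sym: "nd G u v = nd G v u"
  by (simp add: nd_def dist_sym)

lemma nd_tri: "connected G \<Longrightarrow> u \<in> verts G \<Longrightarrow> v \<in> verts G \<Longrightarrow> w \<in> verts G \<Longrightarrow> nd G u w \<le> nd G u v + nd G v w"
  using dist_triangle[of G u w v] conn_dist[of G] by (metis plus_enat_simps(1) enat_ord_simps(1))

lemma graph_edge: "graph G \<Longrightarrow> {u,v} \<in> edges G \<Longrightarrow> u \<in> verts G \<and> v \<in> verts G \<and> u \<noteq> v"
proof -
  assume "graph G" "{u,v} \<in> edges G"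
  then have "card {u,v} = 2" "{u,v} \<subseteq> verts G" by (auto simp: graph_def)
  then show ?thesis by (cases "u = v") auto
qed

lemma nd_edge: "connected G \<Longrightarrow> graph G \<Longrightarrow> {u,v} \<in> edges G \<Longrightarrow> nd G u v = 1"
proof -
  assume c: "connected G" and g: "graph G" and e: "{u,v} \<in> edges G"
  from graph_edge[OF g e] have uv: "u \<in> verts G" "v \<in> verts G" "u \<noteq> v" by auto
  have "dist G u v \<le> 1" by (rule dist_edge[OF e g])
  then have "nd G u v \<le> 1" using conn_dist[OF c uv(1,2)] by (simp add: one_enat_def)
  moreover have "nd G u v \<noteq> 0" using nd_0[OF c uv(1,2)] uv(3) by blast
  ultimately show ?thesis by simp
qed

lemma nd_one: "connected G \<Longrightarrow> u \<in> verts G \<Longrightarrow> v \<in> verts G \<Longrightarrow> nd G u v = 1 \<Longrightarrow> {u,v} \<in> edges G"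
  using conn_dist[of G u v] dist_one[of G u v] by (simp add: one_enat_def)

lemma geo_point:
  assumes c: "connected G" and u: "u \<in> verts G" and v: "v \<in> verts G" and k: "k \<le> nd G u v"
  shows "\<exists>y\<in>verts G. nd G u y = k \<and> nd G y v = nd G u v - k"
proof -
  have "dist G u v \<noteq> \<infinity>" using conn_dist[OF c u v] by simp
  then obtain xs where w: "walk G xs" "hd xs = u" "last xs = v" "dist G u v = enat (length xs - 1)"
    by (rule dist_obtain)
  have len: "nd G u v = length xs - 1" using w(4) conn_dist[OF c u v] by simp
  have ne: "xs \<noteq> []" using w by (simp add: walk_def)
  have kl: "k < length xs" using k len ne by (cases xs) auto
  let ?y = "xs ! k"
  have yv: "?y \<in> verts G" using w(1) kl unfolding walk_def by (meson nth_mem subsetD)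
  have "walk G (take (Suc k) xs)" using walk_take[OF w(1)] by simp
  moreover have "hd (take (Suc k) xs) = u" using w(2) ne by (cases xs) auto
  moreover have "last (take (Suc k) xs) = ?y" using kl by (simp add: take_Suc_conv_app_nth)
  ultimately have "dist G u ?y \<le> enat k" using dist_le[of G "take (Suc k) xs"] kl by simp
  then have a1: "nd G u ?y \<le> k" using conn_dist[OF c u yv] by simp
  have "walk G (drop k xs)" using walk_drop[OF w(1) kl] .
  from dist_le[OF this] have "dist G ?y v \<le> enat (length xs - 1 - k)" using kl w(3) ne
    by (simp add: hd_drop_conv_nth)
  then have a2: "nd G ?y v \<le> length xs - 1 - k" using conn_dist[OF c yv v] by simp
  have "nd G u v \<le> nd G u ?y + nd G ?y v" using nd_tri[OF c u yv v] .
  then show ?thesis using a1 a2 len kl yv by (intro bexI[of _ ?y]) auto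
qed

definition rem :: "'a \<Rightarrow> 'a graph \<Rightarrow> 'a graph" where
  "rem l T = (verts T - {l}, {e \<in> edges T. l \<notin> e})"

lemma rem_simps[simp]: "verts (rem l T) = verts T - {l}" "edges (rem l T) = {e \<in> edges T. l \<notin> e}"
  by (simp_all add: rem_def verts_def edges_def)

lemma leaf_facts:
  assumes t: "tree T" and l: "l \<in> verts T" and e: "{l,p} \<in> edges T" and lf: "\<forall>z. {l,z} \<in> edges T \<longrightarrow> z = p"
  shows "tree (rem l T)" "p \<in> verts T" "p \<noteq> l"
    "\<And>u v. u \<in> verts T - {l} \<Longrightarrow> v \<in> verts T - {l} \<Longrightarrow> nd (rem l T) u v = nd T u v"
    "\<And>z. z \<in> verts T - {l} \<Longrightarrow> nd T l z = nd T p z + 1"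
    "\<And>x y. {x,y} \<in> edges T \<Longrightarrow> x \<noteq> l \<Longrightarrow> y \<noteq> l \<Longrightarrow> {x,y} \<in> edges (rem l T)"
proof -
  have g: "graph T" and c: "connected T" using t by (auto simp: tree_def)
  show pv: "p \<in> verts T" "p \<noteq> l" using graph_edge[OF g e] by auto
  show ee: "\<And>x y. {x,y} \<in> edges T \<Longrightarrow> x \<noteq> l \<Longrightarrow> y \<noteq> l \<Longrightarrow> {x,y} \<in> edges (rem l T)" by simp
  have g': "graph (rem l T)" using g unfolding graph_def by auto
  define f where "f z = (if z = l then p else z)" for z
  have fv: "f x \<in> verts (rem l T)" if "x \<in> verts T" for x using that pv by (auto simp: f_def)
  have fe: "f x = f y \<or> {f x, f y} \<in> edges (rem l T)" if xy: "{x,y} \<in> edges T" for x y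
  proof -
    have "x \<noteq> y" using graph_edge[OF g xy] by simp
    show ?thesis
    proof (cases "x = l")
      case True then have "y = p" using lf xy by blast
      then show ?thesis using True by (simp add: f_def)
    next
      case False
      show ?thesis
      proof (cases "y = l")
        case True then have "x = p" using lf xy by (metis insert_commute)
        then show ?thesis using True by (simp add: f_def)
      next
        case False2: False
        then show ?thesis using False xy by (simp add: f_def)
      qed
    qed
  qed
  have dle: "dist (rem l T) (f u) (f v) \<le> dist T u v" for u v
    by (rule dist_nonexp[OF _ _ g']) (use fv fe in auto)
  have dge: "dist T u v \<le> dist (rem l T) u v" for u v
    by (rule dist_mono) auto
  have deq: "dist (rem l T) u v = dist T u v" if "u \<in> verts T - {l}" "v \<in> verts T - {l}" for u v
    using dle[of u v] dge[of u v] that by (simp add: f_def)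
  have c': "connected (rem l T)"
    unfolding connected_def
  proof (intro ballI)
    fix u v assume "u \<in> verts (rem l T)" "v \<in> verts (rem l T)"
    then show "dist (rem l T) u v < \<infinity>" using deq[of u v] c unfolding connected_def by auto
  qed
  have nc: "\<not> (\<exists>xs. cycle (rem l T) xs)"
  proof
    assume "\<exists>xs. cycle (rem l T) xs"
    then obtain xs where "cycle (rem l T) xs" by blast
    then have "cycle T xs" unfolding cycle_def using walk_mono[of "rem l T" T xs] by auto
    then show False using t by (auto simp: tree_def)
  qed
  show "tree (rem l T)" using g' c' nc pv unfolding tree_def by auto
  show "\<And>u v. u \<in> verts T - {l} \<Longrightarrow> v \<in> verts T - {l} \<Longrightarrow> nd (rem l T) u v = nd T u v"
    using deq by (simp add: nd_def)
  show "nd T l z = nd T p z + 1" if z: "z \<in> verts T - {l}" for z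
  proof -
    have zv: "z \<in> verts T" using z by simp
    have "nd T l z \<le> nd T l p + nd T p z" using nd_tri[OF c l pv(1) zv] .
    moreover have "nd T l p = 1" using nd_edge[OF c g e] .
    moreover have "nd T p z + 1 \<le> nd T l z"
    proof -
      have "dist T l z \<noteq> \<infinity>" using conn_dist[OF c l zv] by simp
      then obtain xs where w: "walk T xs" "hd xs = l" "last xs = z" "dist T l z = enat (length xs - 1)"
        by (rule dist_obtain)
      obtain y ys where xs: "xs = l # y # ys"
        using w z by (cases xs; cases "tl xs") (auto simp: walk_def)
      have "{l,y} \<in> edges T" "walk T (y # ys)" using w(1) xs by (auto simp: walk_Cons2)
      then have "y = p" using lf by blast
      have "dist T p z \<le> enat (length (y # ys) - 1)"
        using dist_le[OF \<open>walk T (y # ys)\<close>] w(3) xs \<open>y = p\<close> by simp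
      then have "nd T p z \<le> length ys" using conn_dist[OF c pv(1) zv] by simp
      moreover have "nd T l z = Suc (length ys)" using w(4) conn_dist[OF c l zv] xs by simp
      ultimately show ?thesis by simp
    qed
    ultimately show ?thesis by simp
  qed
qed

lemma tree_finite: "tree T \<Longrightarrow> finite (verts T)" by (simp add: tree_def graph_def)

lemma leaf_exists:
  assumes t: "tree T" and two: "card (verts T) \<ge> 2"
  shows "\<exists>l p. l \<in> verts T \<and> {l,p} \<in> edges T \<and> (\<forall>z. {l,z} \<in> edges T \<longrightarrow> z = p)"
proof -
  have g: "graph T" and c: "connected T" and fin: "finite (verts T)" and nc: "\<not>(\<exists>xs. cycle T xs)"
    using t by (auto simp: tree_def graph_def)
  have "\<not> card (verts T) \<le> Suc 0" using two by simp
  then obtain u v where uv: "u \<in> verts T" "v \<in> verts T" "u \<noteq> v"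
    using card_le_Suc0_iff_eq[OF fin] by blast
  have "nd T u v \<noteq> 0" using nd_0[OF c uv(1,2)] uv(3) by blast
  then obtain y where y: "y \<in> verts T" "nd T u y = 1" using geo_point[OF c uv(1,2), of 1] by auto
  then have uy: "{u,y} \<in> edges T" using nd_one[OF c uv(1)] by blast
  define P where "P xs \<longleftrightarrow> walk T xs \<and> distinct xs \<and> length xs \<ge> 2" for xs
  have P0: "P [u,y]" using uy uv y graph_edge[OF g uy] by (auto simp: P_def walk_Cons2)
  have bound: "\<forall>xs. P xs \<longrightarrow> length xs < Suc (card (verts T))"
  proof (intro allI impI)
    fix xs assume "P xs"
    then have "set xs \<subseteq> verts T" "distinct xs" by (auto simp: P_def walk_def)
    then show "length xs < Suc (card (verts T))" using fin by (metis card_mono distinct_card le_imp_less_Suc)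
  qed
  obtain xs where Pxs: "P xs" and mx: "\<forall>ys. P ys \<longrightarrow> length ys \<le> length xs"
    using ex_has_greatest_nat[of P "[u,y]" length, OF P0 bound] by blast
  define n where "n = length xs"
  have n2: "n \<ge> 2" using Pxs by (simp add: P_def n_def)
  have w: "walk T xs" and d: "distinct xs" using Pxs by (auto simp: P_def)
  define l where "l = last xs"
  define p where "p = xs ! (n - 2)"
  have "xs \<noteq> []" using n2 n_def by auto
  then have lnth: "l = xs ! (n - 1)" by (simp add: l_def n_def last_conv_nth)
  have lv: "l \<in> verts T" using w n2 unfolding l_def walk_def by auto
  have "{xs ! (n-2), xs ! Suc (n - 2)} \<in> edges T" using w n2 unfolding walk_def n_def by auto
  moreover have "Suc (n - 2) = n - 1" using n2 by arith
  ultimately have lp: "{l,p} \<in> edges T" using lnth p_def by (simp add: insert_commute)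
  have "\<forall>z. {l,z} \<in> edges T \<longrightarrow> z = p"
  proof (intro allI impI)
    fix z assume lz: "{l,z} \<in> edges T"
    have zl: "z \<noteq> l" "z \<in> verts T" using graph_edge[OF g lz] by auto
    show "z = p"
    proof (cases "z \<in> set xs")
      case False
      have "walk T [l,z]" using lz lv zl by (simp add: walk_Cons2)
      have "walk T (xs @ tl [l,z])" by (rule walk_append[OF w \<open>walk T [l,z]\<close>]) (simp add: l_def)
      then have "walk T (xs @ [z])" by simp
      then have "P (xs @ [z])" using d False n2 unfolding P_def n_def by simp
      then have "length (xs @ [z]) \<le> length xs" using mx by blast
      then show ?thesis by simp
    next
      case True
      then obtain j where j: "j < n" "xs ! j = z" by (metis in_set_conv_nth n_def)
      have "j \<noteq> n - 1" using j zl lnth by blast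
      show ?thesis
      proof (rule ccontr)
        assume "z \<noteq> p"
        then have "j \<noteq> n - 2" using j p_def by blast
        then have jn: "j < n - 2" using j \<open>j \<noteq> n - 1\<close> by arith
        let ?ys = "drop j xs"
        have "cycle T ?ys" unfolding cycle_def
        proof (intro conjI)
          show "walk T ?ys" using walk_drop[OF w] j n_def by simp
          show "3 \<le> length ?ys" using jn n_def by simp
          show "distinct ?ys" using d by simp
          have "hd ?ys = z" using j n_def by (simp add: hd_drop_conv_nth)
          moreover have "last ?ys = l" using j n_def l_def by simp
          ultimately show "{last ?ys, hd ?ys} \<in> edges T" using lz by simp
        qed
        then show False using nc by blast
      qed
    qed
  qed
  then show ?thesis using lv lp by blast
qed

lemma tree_induct[consumes 1, case_names single leaf]:
  assumes t: "tree T"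
    and S: "\<And>T v. tree T \<Longrightarrow> verts T = {v} \<Longrightarrow> P T"
    and L: "\<And>T l p. tree T \<Longrightarrow> l \<in> verts T \<Longrightarrow> {l,p} \<in> edges T \<Longrightarrow> (\<forall>z. {l,z} \<in> edges T \<longrightarrow> z = p)
              \<Longrightarrow> P (rem l T) \<Longrightarrow> P T"
  shows "P T"
proof -
  have "\<forall>T::'a graph. tree T \<longrightarrow> card (verts T) = n \<longrightarrow> P T" for n
  proof (induction n rule: less_induct)
    case (less n)
    show ?case
    proof (intro allI impI)
      fix T :: "'a graph" assume t: "tree T" and cn: "card (verts T) = n"
      have fin: "finite (verts T)" and ne: "verts T \<noteq> {}" using t by (auto simp: tree_def graph_def)
      have "card (verts T) > 0" using fin ne by (simp add: card_gt_0_iff)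
      then have "n \<ge> 1" using cn by simp
      show "P T"
      proof (cases "n = 1")
        case True
        then obtain v where "verts T = {v}" using cn card_1_singletonE by blast
        then show ?thesis using S t by blast
      next
        case False
        then obtain l p where lp: "l \<in> verts T" "{l,p} \<in> edges T" "\<forall>z. {l,z} \<in> edges T \<longrightarrow> z = p"
          using leaf_exists[OF t] cn \<open>n \<ge> 1\<close> by fastforce
        have t': "tree (rem l T)" using leaf_facts[OF t lp] by blast
        have "card (verts (rem l T)) < n" using cn lp(1) fin \<open>n \<ge> 1\<close> by (simp add: card_Diff1_less)
        then have "P (rem l T)" using less t' by blast
        then show ?thesis using L[OF t lp] by blast
      qed
    qed
  qed
  then show ?thesis using t by blast
qed

lemma tree_K:
  assumes "tree T"
  shows "\<forall>u v y a. u \<in> verts T \<longrightarrow> v \<in> verts T \<longrightarrow> y \<in> verts T \<longrightarrow> a \<in> verts T \<longrightarrow>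
     nd T u y + nd T y v = nd T u v \<longrightarrow> nd T u y + nd T y a = nd T u a \<or> nd T v y + nd T y a = nd T v a"
  using assms
proof (induction rule: tree_induct)
  case (single T w)
  then show ?case by (auto simp: nd_self)
next
  case (leaf T l p)
  note F = leaf_facts[OF leaf.hyps(1-4)]
  have c: "connected T" using leaf.hyps(1) by (simp add: tree_def)
  have pv: "p \<in> verts T" "p \<noteq> l" using F by auto
  have R: "nd (rem l T) x z = nd T x z" if "x \<in> verts T" "z \<in> verts T" "x \<noteq> l" "z \<noteq> l" for x z
    using F(4) that by auto
  have L: "nd T l z = nd T p z + 1" if "z \<in> verts T" "z \<noteq> l" for z using F(5) that by auto
  have L': "nd T z l = nd T p z + 1" if "z \<in> verts T" "z \<noteq> l" for z using L[OF that] nd_sym by metis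
  have IH: "nd T u y + nd T y a = nd T u a \<or> nd T v y + nd T y a = nd T v a"
    if "u \<in> verts T" "v \<in> verts T" "y \<in> verts T" "a \<in> verts T" "u \<noteq> l" "v \<noteq> l" "y \<noteq> l" "a \<noteq> l"
       "nd T u y + nd T y v = nd T u v" for u v y a
    using leaf.IH that R by auto
  show ?case
  proof (intro allI impI)
    fix u v y a
    assume uv: "u \<in> verts T" "v \<in> verts T" "y \<in> verts T" "a \<in> verts T"
      and g: "nd T u y + nd T y v = nd T u v"
    have tri: "nd T x z \<le> nd T x w + nd T w z" if "x \<in> verts T" "w \<in> verts T" "z \<in> verts T" for x w z
      using nd_tri[OF c that(1,2,3)] .
    have sym: "nd T x z = nd T z x" for x z by (rule nd_sym)
    show "nd T u y + nd T y a = nd T u a \<or> nd T v y + nd T y a = nd T v a"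
    proof (cases "y = l")
      case yl: True
      show ?thesis
      proof (cases "u = l")
        case True then show ?thesis using yl uv by (simp add: nd_self)
      next
        case ul: False
        show ?thesis
        proof (cases "v = l")
          case True then show ?thesis using yl uv by (simp add: nd_self)
        next
          case False
          have "nd T u v \<le> nd T u p + nd T p v" using tri uv pv by blast
          moreover have "nd T u y = nd T p u + 1" using L' uv ul yl by simp
          moreover have "nd T y v = nd T p v + 1" using L uv False yl by simp
          ultimately show ?thesis using g sym[of u p] by simp
        qed
      qed
    next
      case yl: False
      show ?thesis
      proof (cases "u = l")
        case ul: True
        show ?thesis
        proof (cases "v = l")
          case True
          then have "nd T u y = 0" using g ul uv by (simp add: nd_self)
          then have "u = y" using nd_0[OF c] uv by blast
          then show ?thesis using yl ul by simp
        next
          case vl: False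
          have e1: "nd T u y = nd T p y + 1" using L uv yl ul by simp
          have e2: "nd T u v = nd T p v + 1" using L uv vl ul by simp
          show ?thesis
          proof (cases "a = l")
            case True
            have "nd T y a = nd T u y" using True ul sym by simp
            moreover have "nd T v a = nd T u v" using True ul sym by simp
            ultimately show ?thesis using g sym[of v y] by simp
          next
            case al: False
            have "nd T p y + nd T y v = nd T p v" using g e1 e2 by simp
            then have "nd T p y + nd T y a = nd T p a \<or> nd T v y + nd T y a = nd T v a"
              using IH[of p v y a] uv pv yl vl al by blast
            moreover have "nd T u a = nd T p a + 1" using L uv al ul by simp
            ultimately show ?thesis using e1 by auto
          qed
        qed
      next
        case ul: False
        show ?thesis
        proof (cases "v = l")
          case vl: True
          have e1: "nd T v y = nd T p y + 1" using L uv yl vl by simp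
          have e2: "nd T u v = nd T p u + 1" using L' uv vl ul by simp
          show ?thesis
          proof (cases "a = l")
            case True
            have "nd T y a = nd T v y" using True vl sym by simp
            moreover have "nd T u a = nd T u v" using True vl by simp
            ultimately show ?thesis using g sym[of v y] by simp
          next
            case al: False
            have "nd T u y + nd T y p = nd T u p" using g e1 e2 sym[of y v] sym[of p y] sym[of p u] by simp
            then have "nd T u y + nd T y a = nd T u a \<or> nd T p y + nd T y a = nd T p a"
              using IH[of u p y a] uv pv yl ul al by blast
            moreover have "nd T v a = nd T p a + 1" using L uv al vl by simp
            ultimately show ?thesis using e1 by auto
          qed
        next
          case vl: False
          show ?thesis
          proof (cases "a = l")
            case al: True
            have "nd T u y + nd T y p = nd T u p \<or> nd T v y + nd T y p = nd T v p"
              using IH[of u v y p] uv pv yl ul vl g by blast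
            moreover have "nd T y a = nd T p y + 1" "nd T u a = nd T p u + 1" "nd T v a = nd T p v + 1"
              using L' uv yl ul vl al by auto
            ultimately show ?thesis using sym[of y p] sym[of u p] sym[of v p] by auto
          next
            case False
            then show ?thesis using IH[of u v y a] uv yl ul vl g by blast
          qed
        qed
      qed
    qed
  qed
qed

lemma tree_U:
  assumes "tree T"
  shows "\<forall>x w a. {x,w} \<in> edges T \<longrightarrow> a \<in> verts T \<longrightarrow> nd T a w = nd T a x + 1 \<or> nd T a x = nd T a w + 1"
  using assms
proof (induction rule: tree_induct)
  case (single T v)
  have "False" if "{x,w} \<in> edges T" for x w
    using graph_edge[OF tree_graph[OF single.hyps(1)] that] single.hyps(2) by auto
  then show ?case by blast
next
  case (leaf T l p)
  note F = leaf_facts[OF leaf.hyps(1-4)]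
  have c: "connected T" and g: "graph T" using leaf.hyps(1) by (auto simp: tree_def)
  have pv: "p \<in> verts T" "p \<noteq> l" using F by auto
  have R: "nd (rem l T) x z = nd T x z" if "x \<in> verts T" "z \<in> verts T" "x \<noteq> l" "z \<noteq> l" for x z
    using F(4) that by auto
  have L: "nd T l z = nd T p z + 1" if "z \<in> verts T" "z \<noteq> l" for z using F(5) that by auto
  have L': "nd T z l = nd T p z + 1" if "z \<in> verts T" "z \<noteq> l" for z using L[OF that] nd_sym by metis
  have lp1: "nd T l p = 1" using nd_edge[OF c g leaf.hyps(3)] .
  show ?case
  proof (intro allI impI)
    fix x w a assume e: "{x,w} \<in> edges T" and a: "a \<in> verts T"
    have xw: "x \<in> verts T" "w \<in> verts T" "x \<noteq> w" using graph_edge[OF g e] by auto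
    show "nd T a w = nd T a x + 1 \<or> nd T a x = nd T a w + 1"
    proof (cases "x = l")
      case True
      then have "w = p" using leaf.hyps(4) e by blast
      then show ?thesis using True a L' lp1 nd_self[OF a] nd_sym[of T a p] by (cases "a = l") auto
    next
      case xl: False
      show ?thesis
      proof (cases "w = l")
        case True
        then have "x = p" using leaf.hyps(4) e by (metis insert_commute)
        then show ?thesis using True a L' lp1 nd_self[OF a] nd_sym[of T a p] by (cases "a = l") auto
      next
        case wl: False
        have e': "{x,w} \<in> edges (rem l T)" using F(6)[OF e xl wl] .
        show ?thesis
        proof (cases "a = l")
          case True
          have "nd (rem l T) p w = nd (rem l T) p x + 1 \<or> nd (rem l T) p x = nd (rem l T) p w + 1"
            using leaf.IH e' pv by auto
          then show ?thesis using R xw pv xl wl True L by auto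
        next
          case False
          have "nd (rem l T) a w = nd (rem l T) a x + 1 \<or> nd (rem l T) a x = nd (rem l T) a w + 1"
            using leaf.IH e' a False by auto
          then show ?thesis using R xw a xl wl False by auto
        qed
      qed
    qed
  qed
qed

lemma tree_U2:
  assumes "tree T"
  shows "\<forall>x w1 w2 a. {x,w1} \<in> edges T \<longrightarrow> {x,w2} \<in> edges T \<longrightarrow> a \<in> verts T \<longrightarrow>
      nd T a w1 + 1 = nd T a x \<longrightarrow> nd T a w2 + 1 = nd T a x \<longrightarrow> w1 = w2"
  using assms
proof (induction rule: tree_induct)
  case (single T v)
  have "False" if "{x,w} \<in> edges T" for x w
    using graph_edge[OF tree_graph[OF single.hyps(1)] that] single.hyps(2) by auto
  then show ?case by blast
next
  case (leaf T l p)
  note F = leaf_facts[OF leaf.hyps(1-4)]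
  have c: "connected T" and g: "graph T" using leaf.hyps(1) by (auto simp: tree_def)
  have pv: "p \<in> verts T" "p \<noteq> l" using F by auto
  have R: "nd (rem l T) x z = nd T x z" if "x \<in> verts T" "z \<in> verts T" "x \<noteq> l" "z \<noteq> l" for x z
    using F(4) that by auto
  have L: "nd T l z = nd T p z + 1" if "z \<in> verts T" "z \<noteq> l" for z using F(5) that by auto
  have L': "nd T z l = nd T p z + 1" if "z \<in> verts T" "z \<noteq> l" for z using L[OF that] nd_sym by metis
  have lp1: "nd T l p = 1" using nd_edge[OF c g leaf.hyps(3)] .
  have key: "w1 = w2" if e1: "{x,w1} \<in> edges T" and e2: "{x,w2} \<in> edges T" and a: "a \<in> verts T"
    and d1: "nd T a w1 + 1 = nd T a x" and d2: "nd T a w2 + 1 = nd T a x" and w1l: "w1 = l" for x w1 w2 a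
  proof -
    have "x = p" using leaf.hyps(4) e1 w1l by (metis insert_commute)
    have xv: "x \<in> verts T" "x \<noteq> l" using pv \<open>x = p\<close> by auto
    have w2v: "w2 \<in> verts T" using graph_edge[OF g e2] by auto
    show ?thesis
    proof (cases "a = l")
      case True
      then have "nd T a x = 1" using lp1 \<open>x = p\<close> by simp
      then have "nd T a w2 = 0" using d2 by simp
      then have "a = w2" using nd_0[OF c a w2v] by simp
      then show ?thesis using True w1l by simp
    next
      case False
      have "nd T a w1 = nd T p a + 1" using L' a False w1l by simp
      moreover have "nd T a x = nd T p a" using \<open>x = p\<close> nd_sym by metis
      ultimately show ?thesis using d1 by simp
    qed
  qed
  show ?case
  proof (intro allI impI)
    fix x w1 w2 a assume e1: "{x,w1} \<in> edges T" and e2: "{x,w2} \<in> edges T" and a: "a \<in> verts T"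
      and d1: "nd T a w1 + 1 = nd T a x" and d2: "nd T a w2 + 1 = nd T a x"
    have xw: "x \<in> verts T" "w1 \<in> verts T" "w2 \<in> verts T" using graph_edge[OF g e1] graph_edge[OF g e2] by auto
    show "w1 = w2"
    proof (cases "x = l")
      case True
      then show ?thesis using leaf.hyps(4) e1 e2 by blast
    next
      case xl: False
      show ?thesis
      proof (cases "w1 = l \<or> w2 = l")
        case True
        then show ?thesis using key[OF e1 e2 a d1 d2] key[OF e2 e1 a d2 d1] by metis
      next
        case False
        then have w1l: "w1 \<noteq> l" and w2l: "w2 \<noteq> l" by auto
        have e1': "{x,w1} \<in> edges (rem l T)" using F(6)[OF e1 xl w1l] .
        have e2': "{x,w2} \<in> edges (rem l T)" using F(6)[OF e2 xl w2l] .
        show ?thesis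
        proof (cases "a = l")
          case True
          have "nd (rem l T) p w1 + 1 = nd (rem l T) p x" "nd (rem l T) p w2 + 1 = nd (rem l T) p x"
            using R xw pv xl w1l w2l True L d1 d2 by auto
          then show ?thesis using leaf.IH e1' e2' pv by auto
        next
          case False
          have "nd (rem l T) a w1 + 1 = nd (rem l T) a x" "nd (rem l T) a w2 + 1 = nd (rem l T) a x"
            using R xw a xl w1l w2l False d1 d2 by auto
          then show ?thesis using leaf.IH e1' e2' a False by auto
        qed
      qed
    qed
  qed
qed

lemma tree_helly:
  assumes "tree T"
  shows "\<forall>(A :: 'i set) c r. (\<forall>i\<in>A. c i \<in> verts T) \<longrightarrow> (\<forall>i\<in>A. \<forall>j\<in>A. nd T (c i) (c j) \<le> r i + r j)
     \<longrightarrow> (\<exists>y\<in>verts T. \<forall>i\<in>A. nd T (c i) y \<le> r i)"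
  using assms
proof (induction rule: tree_induct)
  case (single T v)
  then show ?case by (auto simp: nd_self)
next
  case (leaf T l p)
  note F = leaf_facts[OF leaf.hyps(1-4)]
  have c: "connected T" and g: "graph T" using leaf.hyps(1) by (auto simp: tree_def)
  have pv: "p \<in> verts T" "p \<noteq> l" using F by auto
  have R: "nd (rem l T) x z = nd T x z" if "x \<in> verts T" "z \<in> verts T" "x \<noteq> l" "z \<noteq> l" for x z
    using F(4) that by auto
  have L: "nd T l z = nd T p z + 1" if "z \<in> verts T" "z \<noteq> l" for z using F(5) that by auto
  have L': "nd T z l = nd T p z + 1" if "z \<in> verts T" "z \<noteq> l" for z using L[OF that] nd_sym by metis
  show ?case
  proof (intro allI impI)
    fix A :: "'i set" and cc r
    assume cv: "\<forall>i\<in>A. cc i \<in> verts T" and pw: "\<forall>i\<in>A. \<forall>j\<in>A. nd T (cc i) (cc j) \<le> r i + r j"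
    show "\<exists>y\<in>verts T. \<forall>i\<in>A. nd T (cc i) y \<le> r i"
    proof (cases "\<exists>i\<in>A. cc i = l \<and> r i = 0")
      case True
      then obtain i where i: "i \<in> A" "cc i = l" "r i = 0" by blast
      have "\<forall>j\<in>A. nd T (cc j) l \<le> r j" using pw i by (metis add.right_neutral)
      then show ?thesis using leaf.hyps(2) by blast
    next
      case False
      define c' where "c' i = (if cc i = l then p else cc i)" for i
      define r' where "r' i = (if cc i = l then r i - 1 else r i)" for i
      have c'v: "\<forall>i\<in>A. c' i \<in> verts (rem l T)" using cv pv by (auto simp: c'_def)
      have pw': "\<forall>i\<in>A. \<forall>j\<in>A. nd (rem l T) (c' i) (c' j) \<le> r' i + r' j"
      proof (intro ballI)
        fix i j assume ij: "i \<in> A" "j \<in> A"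
        have "c' i \<in> verts T" "c' i \<noteq> l" "c' j \<in> verts T" "c' j \<noteq> l" using c'v ij by auto
        then have "nd (rem l T) (c' i) (c' j) = nd T (c' i) (c' j)" using R by blast
        moreover have "nd T (c' i) (c' j) \<le> r' i + r' j"
        proof (cases "cc i = l")
          case ci: True
          have ri: "r i \<ge> 1" using False ij ci by auto
          show ?thesis
          proof (cases "cc j = l")
            case True
            then show ?thesis using ci nd_self[OF pv(1)] by (simp add: c'_def)
          next
            case cj: False
            have "nd T (cc i) (cc j) = nd T p (cc j) + 1" using L ci cj cv ij by simp
            moreover have "nd T (cc i) (cc j) \<le> r i + r j" using pw ij by blast
            ultimately show ?thesis using ci cj ri by (auto simp: c'_def r'_def)
          qed
        next
          case ci: False
          show ?thesis
          proof (cases "cc j = l")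
            case cj: True
            have rj: "r j \<ge> 1" using False ij cj by auto
            have "nd T (cc i) (cc j) = nd T p (cc i) + 1" using L' ci cj cv ij by simp
            moreover have "nd T (cc i) (cc j) \<le> r i + r j" using pw ij by blast
            ultimately show ?thesis using ci cj rj nd_sym[of T p "cc i"] by (auto simp: c'_def r'_def)
          next
            case cj: False
            then show ?thesis using pw ij ci by (auto simp: c'_def r'_def)
          qed
        qed
        ultimately show "nd (rem l T) (c' i) (c' j) \<le> r' i + r' j" by simp
      qed
      obtain y where y: "y \<in> verts (rem l T)" "\<forall>i\<in>A. nd (rem l T) (c' i) y \<le> r' i"
        using spec[OF spec[OF spec[OF leaf.IH, of A], of c'], of r'] c'v pw' by blast
      have yv: "y \<in> verts T" "y \<noteq> l" using y by auto
      have "\<forall>i\<in>A. nd T (cc i) y \<le> r i"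
      proof
        fix i assume i: "i \<in> A"
        have ci: "c' i \<in> verts T" "c' i \<noteq> l" using c'v i by auto
        have e: "nd (rem l T) (c' i) y = nd T (c' i) y" using R[OF ci(1) yv(1) ci(2) yv(2)] .
        have "nd (rem l T) (c' i) y \<le> r' i" using y(2) i by blast
        then have d: "nd T (c' i) y \<le> r' i" using e by linarith
        show "nd T (cc i) y \<le> r i"
        proof (cases "cc i = l")
          case True
          have "r i \<ge> 1" using False i True by auto
          then show ?thesis using d L[OF yv] True by (simp add: c'_def r'_def)
        next
          case False
          then show ?thesis using d by (simp add: c'_def r'_def)
        qed
      qed
      then show ?thesis using yv by blast
    qed
  qed
qed

lemma profile:
  assumes t: "tree T" and v: "a \<in> verts T" "y \<in> verts T" "w \<in> verts T" "b \<in> verts T"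
    and g: "nd T a y + nd T y w = nd T a w"
  shows "int (nd T y b) = max (int (nd T a b) - int (nd T a y)) (int (nd T w b) - int (nd T y w))"
proof -
  have c: "connected T" using t by (simp add: tree_def)
  have "nd T a y + nd T y b = nd T a b \<or> nd T w y + nd T y b = nd T w b"
    using tree_K[OF t] v g by blast
  moreover have "nd T a b \<le> nd T a y + nd T y b" using nd_tri[OF c v(1,2,4)] .
  moreover have "nd T w b \<le> nd T w y + nd T y b" using nd_tri[OF c v(3,2,4)] .
  moreover have "nd T w y = nd T y w" by (rule nd_sym)
  ultimately show ?thesis by auto
qed

lemma extension_aux:
  assumes c: "connected G" and fin: "finite (verts G)" and t: "tree T"
  shows "\<forall>A \<phi>. A \<subseteq> verts G \<longrightarrow> (\<forall>a\<in>A. \<phi> a \<in> verts T) \<longrightarrow> (\<forall>a\<in>A. \<forall>b\<in>A. nd T (\<phi> a) (\<phi> b) \<le> nd G a b)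
     \<longrightarrow> card (verts G - A) = n \<longrightarrow>
     (\<exists>g. (\<forall>a\<in>A. g a = \<phi> a) \<and> (\<forall>x\<in>verts G. g x \<in> verts T) \<and> (\<forall>x\<in>verts G. \<forall>y\<in>verts G. nd T (g x) (g y) \<le> nd G x y))"
proof (induction n)
  case 0
  show ?case
  proof (intro allI impI)
    fix A \<phi> assume A: "A \<subseteq> verts G" and phi: "\<forall>a\<in>A. \<phi> a \<in> verts T"
      and pw: "\<forall>a\<in>A. \<forall>b\<in>A. nd T (\<phi> a) (\<phi> b) \<le> nd G a b" and cd: "card (verts G - A) = 0"
    have "verts G - A = {}" using cd fin by simp
    then have "A = verts G" using A by blast
    then show "\<exists>g. (\<forall>a\<in>A. g a = \<phi> a) \<and> (\<forall>x\<in>verts G. g x \<in> verts T) \<and> (\<forall>x\<in>verts G. \<forall>y\<in>verts G. nd T (g x) (g y) \<le> nd G x y)"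
      using phi pw by (intro exI[of _ \<phi>]) auto
  qed
next
  case (Suc n)
  show ?case
  proof (intro allI impI)
    fix A \<phi> assume A: "A \<subseteq> verts G" and phi: "\<forall>a\<in>A. \<phi> a \<in> verts T"
      and pw: "\<forall>a\<in>A. \<forall>b\<in>A. nd T (\<phi> a) (\<phi> b) \<le> nd G a b" and cd: "card (verts G - A) = Suc n"
    have "verts G - A \<noteq> {}"
    proof
      assume e: "verts G - A = {}"
      have "card (verts G - A) = 0" by (subst e) simp
      then show False using cd by simp
    qed
    then obtain x where x: "x \<in> verts G" "x \<notin> A" by blast
    have pw2: "\<forall>a\<in>A. \<forall>b\<in>A. nd T (\<phi> a) (\<phi> b) \<le> nd G a x + nd G b x"
    proof (intro ballI)
      fix a b assume ab: "a \<in> A" "b \<in> A"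
      have "nd G a b \<le> nd G a x + nd G x b" using nd_tri[OF c _ x(1)] A ab by blast
      then show "nd T (\<phi> a) (\<phi> b) \<le> nd G a x + nd G b x" using pw ab nd_sym[of G x b] by fastforce
    qed
    obtain y where y: "y \<in> verts T" "\<forall>a\<in>A. nd T (\<phi> a) y \<le> nd G a x"
      using spec[OF spec[OF spec[OF tree_helly[OF t], of A], of \<phi>], of "\<lambda>a. nd G a x"] phi pw2 by blast
    define \<psi> where "\<psi> = \<phi>(x := y)"
    have A': "insert x A \<subseteq> verts G" using A x by blast
    have psi: "\<forall>a\<in>insert x A. \<psi> a \<in> verts T" using phi y x by (auto simp: \<psi>_def)
    have pw': "\<forall>a\<in>insert x A. \<forall>b\<in>insert x A. nd T (\<psi> a) (\<psi> b) \<le> nd G a b"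
    proof (intro ballI)
      fix a b assume ab: "a \<in> insert x A" "b \<in> insert x A"
      show "nd T (\<psi> a) (\<psi> b) \<le> nd G a b"
      proof (cases "a = x")
        case True
        show ?thesis
        proof (cases "b = x")
          case True then show ?thesis using \<open>a = x\<close> nd_self[OF y(1)] by (simp add: \<psi>_def)
        next
          case False then have "b \<in> A" using ab by simp
          then show ?thesis using y(2) \<open>a = x\<close> False x(2) nd_sym[of T y "\<phi> b"] nd_sym[of G x b]
            by (auto simp: \<psi>_def)
        qed
      next
        case False then have aA: "a \<in> A" using ab by simp
        show ?thesis
        proof (cases "b = x")
          case True then show ?thesis using y(2) aA False x(2) by (auto simp: \<psi>_def)
        next
          case bF: False then have "b \<in> A" using ab by simp
          then show ?thesis using pw aA False bF by (auto simp: \<psi>_def)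
        qed
      qed
    qed
    have "verts G - insert x A = (verts G - A) - {x}" by blast
    moreover have "card ((verts G - A) - {x}) = card (verts G - A) - 1"
      using x fin by (intro card_Diff_singleton) auto
    ultimately have "card (verts G - insert x A) = n" using cd by simp
    then obtain g where g: "\<forall>a\<in>insert x A. g a = \<psi> a" "\<forall>x\<in>verts G. g x \<in> verts T"
      "\<forall>x\<in>verts G. \<forall>y\<in>verts G. nd T (g x) (g y) \<le> nd G x y"
      using spec[OF spec[OF Suc.IH, of "insert x A"], of \<psi>] A' psi pw' by blast
    have "\<forall>a\<in>A. g a = \<phi> a" using g(1) x(2) by (auto simp: \<psi>_def)
    then show "\<exists>g. (\<forall>a\<in>A. g a = \<phi> a) \<and> (\<forall>x\<in>verts G. g x \<in> verts T) \<and> (\<forall>x\<in>verts G. \<forall>y\<in>verts G. nd T (g x) (g y) \<le> nd G x y)"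
      using g(2,3) by blast
  qed
qed

lemma extension:
  assumes "tree G" "tree T" "A \<subseteq> verts G" "\<forall>a\<in>A. \<phi> a \<in> verts T" "\<forall>a\<in>A. \<forall>b\<in>A. nd T (\<phi> a) (\<phi> b) \<le> nd G a b"
  shows "\<exists>g. (\<forall>a\<in>A. g a = \<phi> a) \<and> (\<forall>x\<in>verts G. g x \<in> verts T) \<and> (\<forall>x\<in>verts G. \<forall>y\<in>verts G. nd T (g x) (g y) \<le> nd G x y)"
  using extension_aux[of G T "card (verts G - A)"] assms by (auto simp: tree_def graph_def)

definition gunion :: "'a graph \<Rightarrow> 'a graph \<Rightarrow> 'a graph" where
  "gunion A B = (verts A \<union> verts B, edges A \<union> edges B)"

lemma gunion_simps[simp]: "verts (gunion A B) = verts A \<union> verts B" "edges (gunion A B) = edges A \<union> edges B"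
  by (simp_all add: gunion_def verts_def edges_def)

lemma graph_gunion: "graph A \<Longrightarrow> graph B \<Longrightarrow> graph (gunion A B)"
  unfolding graph_def by auto

definition gmap :: "('a \<Rightarrow> 'b) \<Rightarrow> 'a graph \<Rightarrow> 'b graph" where
  "gmap h G = (h ` verts G, (\<lambda>e. h ` e) ` edges G)"

lemma gmap_simps[simp]: "verts (gmap h G) = h ` verts G" "edges (gmap h G) = (\<lambda>e. h ` e) ` edges G"
  by (simp_all add: gmap_def verts_def edges_def)

lemma graph_gmap: "graph G \<Longrightarrow> inj_on h (verts G) \<Longrightarrow> graph (gmap h G)"
  unfolding graph_def by (auto simp: card_image inj_on_subset)

lemma edge_pair: "graph G \<Longrightarrow> e \<in> edges G \<Longrightarrow> \<exists>c d. e = {c,d} \<and> c \<noteq> d \<and> c \<in> verts G \<and> d \<in> verts G"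
  unfolding graph_def by (metis card_2_iff insert_subset)

lemma dist_gmap:
  assumes g: "graph G" and inj: "inj_on h (verts G)" and uv: "u \<in> verts G" "v \<in> verts G"
  shows "dist (gmap h G) (h u) (h v) = dist G u v"
proof (rule antisym)
  show "dist (gmap h G) (h u) (h v) \<le> dist G u v"
  proof (rule dist_nonexp[OF _ _ graph_gmap[OF g inj]])
    show "h x \<in> verts (gmap h G)" if "x \<in> verts G" for x using that by simp
    show "h x = h y \<or> {h x, h y} \<in> edges (gmap h G)" if "{x,y} \<in> edges G" for x y
    proof -
      have "h ` {x,y} \<in> (\<lambda>e. h ` e) ` edges G" using that by (rule imageI)
      then show ?thesis by simp
    qed
  qed
  define k where "k = inv_into (verts G) h"
  have k: "k (h z) = z" if "z \<in> verts G" for z using inj that by (simp add: k_def)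
  have "dist G (k (h u)) (k (h v)) \<le> dist (gmap h G) (h u) (h v)"
  proof (rule dist_nonexp[OF _ _ g])
    show "k x \<in> verts G" if "x \<in> verts (gmap h G)" for x using that k by auto
    show "k x = k y \<or> {k x, k y} \<in> edges G" if xy: "{x,y} \<in> edges (gmap h G)" for x y
    proof -
      obtain e where e: "e \<in> edges G" "{x,y} = h ` e" using xy by auto
      obtain c d where cd: "e = {c,d}" "c \<in> verts G" "d \<in> verts G" using edge_pair[OF g e(1)] by blast
      have "{x,y} = {h c, h d}" using e cd by simp
      then have "(x = h c \<and> y = h d) \<or> (x = h d \<and> y = h c)" by (metis doubleton_eq_iff)
      then show ?thesis using k cd e(1) by (auto simp: insert_commute)
    qed
  qed
  then show "dist G u v \<le> dist (gmap h G) (h u) (h v)" using k uv by simp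
qed

lemma iso_gmap:
  assumes iso: "graph_iso G H f" and gH: "graph H" and inj: "inj_on h (verts H)"
  shows "graph_iso G (gmap h H) (h \<circ> f)"
  unfolding graph_iso_def
proof (intro conjI ballI)
  have b: "bij_betw f (verts G) (verts H)" using iso by (simp add: graph_iso_def)
  show "bij_betw (h \<circ> f) (verts G) (verts (gmap h H))"
    using bij_betw_trans[OF b inj_on_imp_bij_betw[OF inj]] by simp
  fix u v assume uv: "u \<in> verts G" "v \<in> verts G"
  have fuv: "f u \<in> verts H" "f v \<in> verts H" using b uv by (auto simp: bij_betw_def)
  have "{u, v} \<in> edges G \<longleftrightarrow> {f u, f v} \<in> edges H" using iso uv by (simp add: graph_iso_def)
  also have "\<dots> \<longleftrightarrow> {h (f u), h (f v)} \<in> edges (gmap h H)"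
  proof
    assume "{f u, f v} \<in> edges H"
    then have "h ` {f u, f v} \<in> (\<lambda>e. h ` e) ` edges H" by (rule imageI)
    then show "{h (f u), h (f v)} \<in> edges (gmap h H)" by simp
  next
    assume "{h (f u), h (f v)} \<in> edges (gmap h H)"
    then obtain e where e: "e \<in> edges H" "h ` {f u, f v} = h ` e" by auto
    have "e \<subseteq> verts H" using gH e(1) by (auto simp: graph_def)
    moreover have "{f u, f v} \<subseteq> verts H" using fuv by auto
    ultimately have "{f u, f v} = e" using inj_on_image_eq_iff[OF inj] e(2) by blast
    then show "{f u, f v} \<in> edges H" using e(1) by simp
  qed
  finally show "{u, v} \<in> edges G \<longleftrightarrow> {(h \<circ> f) u, (h \<circ> f) v} \<in> edges (gmap h H)" by simp
qed

lemma iso_tree: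
  assumes iso: "graph_iso G H f" and t: "tree G" and gH: "graph H"
  shows "tree H"
proof -
  have b: "bij_betw f (verts G) (verts H)" using iso by (simp add: graph_iso_def)
  have gG: "graph G" and cG: "connected G" and ncG: "\<not>(\<exists>xs. cycle G xs)" and neG: "verts G \<noteq> {}"
    using t by (auto simp: tree_def)
  have ed: "{u,v} \<in> edges G \<longleftrightarrow> {f u, f v} \<in> edges H" if "u \<in> verts G" "v \<in> verts G" for u v
    using iso that by (simp add: graph_iso_def)
  have fv: "f u \<in> verts H" if "u \<in> verts G" for u using b that by (auto simp: bij_betw_def)
  have dle: "dist H (f u) (f v) \<le> dist G u v" for u v
  proof (rule dist_nonexp[OF _ _ gH])
    show "f x \<in> verts H" if "x \<in> verts G" for x using fv that .
    show "f x = f y \<or> {f x, f y} \<in> edges H" if "{x,y} \<in> edges G" for x y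
      using that ed graph_edge[OF gG that] by blast
  qed
  have conn: "connected H" unfolding connected_def
  proof (intro ballI)
    fix u' v' assume "u' \<in> verts H" "v' \<in> verts H"
    then have "u' \<in> f ` verts G" "v' \<in> f ` verts G" using b by (auto simp: bij_betw_def)
    then obtain u v where "u \<in> verts G" "v \<in> verts G" "u' = f u" "v' = f v" by blast
    then show "dist H u' v' < \<infinity>" using dle[of u v] cG unfolding connected_def by (meson le_less_trans)
  qed
  define k where "k = inv_into (verts G) f"
  have kv: "k z \<in> verts G" "f (k z) = z" if "z \<in> verts H" for z
    using that b by (auto simp: k_def bij_betw_def inv_into_into f_inv_into_f)
  have kinj: "inj_on k (verts H)" using b by (simp add: k_def bij_betw_def inj_on_inv_into)
  have nc: "\<not>(\<exists>xs. cycle H xs)"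
  proof
    assume "\<exists>xs. cycle H xs"
    then obtain xs where cy: "cycle H xs" by blast
    have w: "walk H xs" "length xs \<ge> 3" "distinct xs" "{last xs, hd xs} \<in> edges H"
      using cy by (auto simp: cycle_def)
    have sv: "set xs \<subseteq> verts H" using w by (simp add: walk_def)
    have ekv: "{k a, k b} \<in> edges G" if "{a,b} \<in> edges H" "a \<in> verts H" "b \<in> verts H" for a b
      using ed[OF kv(1)[OF that(2)] kv(1)[OF that(3)]] kv(2)[OF that(2)] kv(2)[OF that(3)] that(1) by simp
    have "cycle G (map k xs)" unfolding cycle_def walk_def
    proof (intro conjI allI impI)
      show "map k xs \<noteq> []" using w by auto
      show "set (map k xs) \<subseteq> verts G" using sv kv by auto
      fix i assume i: "Suc i < length (map k xs)"
      have "{xs ! i, xs ! Suc i} \<in> edges H" using w(1) i unfolding walk_def by simp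
      moreover have "xs ! i \<in> verts H" "xs ! Suc i \<in> verts H" using sv i by auto
      ultimately show "{map k xs ! i, map k xs ! Suc i} \<in> edges G" using ekv i by simp
    next
      show "3 \<le> length (map k xs)" using w by simp
      show "distinct (map k xs)" using w(3) kinj sv by (simp add: distinct_map inj_on_subset)
      have ne: "xs \<noteq> []" using w by auto
      have "last xs \<in> verts H" "hd xs \<in> verts H" using sv ne by auto
      then show "{last (map k xs), hd (map k xs)} \<in> edges G" using ekv w(4) ne by (simp add: last_map hd_map)
    qed
    then show False using ncG by blast
  qed
  have "verts H \<noteq> {}" using neG b by (auto simp: bij_betw_def)
  then show ?thesis using gH conn nc by (simp add: tree_def)
qed

lemma add_leaf:
  assumes t: "tree G'" and x: "x \<notin> verts G'" and w: "w \<in> verts G'"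
    and G: "verts G = insert x (verts G')" "edges G = insert {x,w} (edges G')"
  shows "tree G"
proof -
  have g': "graph G'" and c': "connected G'" and nc': "\<not>(\<exists>xs. cycle G' xs)" using t by (auto simp: tree_def)
  have xw: "x \<noteq> w" using x w by auto
  have g: "graph G" using g' G xw w unfolding graph_def by auto
  have dm: "dist G u v \<le> dist G' u v" for u v by (rule dist_mono) (use G in auto)
  have xe: "dist G x w \<le> 1" using dist_edge[of x w G] G g by simp
  have fin: "dist G u v < \<infinity>" if "u \<in> verts G'" "v \<in> verts G'" for u v
    using dm[of u v] c' that unfolding connected_def by (meson le_less_trans)
  have finx: "dist G x v < \<infinity>" if "v \<in> verts G'" for v
  proof -
    have "dist G x v \<le> dist G x w + dist G w v" by (rule dist_triangle)
    moreover have "dist G x w \<noteq> \<infinity>" using xe by (cases "dist G x w") auto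
    moreover have "dist G w v \<noteq> \<infinity>" using fin[OF w that] by simp
    ultimately have "dist G x w + dist G w v < \<infinity>" by (simp add: plus_eq_infty_iff_enat less_le)
    then show ?thesis using \<open>dist G x v \<le> dist G x w + dist G w v\<close> by (meson le_less_trans)
  qed
  have conn: "connected G" unfolding connected_def
  proof (intro ballI)
    fix u v assume uv: "u \<in> verts G" "v \<in> verts G"
    show "dist G u v < \<infinity>"
    proof (cases "u = x")
      case True
      show ?thesis
      proof (cases "v = x")
        case True then show ?thesis using \<open>u = x\<close> dist_self[of x G] G by simp
      next
        case False then show ?thesis using finx \<open>u = x\<close> uv G by auto
      qed
    next
      case False
      show ?thesis
      proof (cases "v = x")
        case True then show ?thesis using finx False uv G dist_sym[of G u v] by auto
      next
        case False2: False then show ?thesis using fin False uv G by auto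
      qed
    qed
  qed
  have xnb: "z = w" if "{x,z} \<in> edges G" for z
  proof -
    have "{x,z} = {x,w} \<or> {x,z} \<in> edges G'" using that G by auto
    then show ?thesis
    proof
      assume "{x,z} \<in> edges G'" then show ?thesis using graph_edge[OF g'] x by blast
    next
      assume "{x,z} = {x,w}" then show ?thesis by (auto simp: doubleton_eq_iff)
    qed
  qed
  have nc: "\<not>(\<exists>xs. cycle G xs)"
  proof
    assume "\<exists>xs. cycle G xs"
    then obtain xs where cy: "cycle G xs" by blast
    have w1: "walk G xs" "length xs \<ge> 3" "distinct xs" "{last xs, hd xs} \<in> edges G"
      using cy by (auto simp: cycle_def)
    define n where "n = length xs"
    have ne: "xs \<noteq> []" using w1 by auto
    show False
    proof (cases "x \<in> set xs")
      case False
      have "cycle G' xs" unfolding cycle_def walk_def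
      proof (intro conjI allI impI)
        show "xs \<noteq> []" using ne .
        show "set xs \<subseteq> verts G'" using w1(1) False G unfolding walk_def by auto
        fix i assume i: "Suc i < length xs"
        have "{xs ! i, xs ! Suc i} \<in> edges G" using w1(1) i unfolding walk_def by simp
        moreover have "xs ! i \<noteq> x" "xs ! Suc i \<noteq> x" using False i by (auto dest: nth_mem)
        ultimately show "{xs ! i, xs ! Suc i} \<in> edges G'" using G by (auto simp: doubleton_eq_iff)
      next
        show "3 \<le> length xs" "distinct xs" using w1 by auto
        have "last xs \<noteq> x" "hd xs \<noteq> x" using False ne by auto
        then show "{last xs, hd xs} \<in> edges G'" using w1(4) G by (auto simp: doubleton_eq_iff)
      qed
      then show False using nc' by blast
    next
      case True
      then obtain i where i: "i < n" "xs ! i = x" by (metis in_set_conv_nth n_def)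
      have n3: "n \<ge> 3" using w1 n_def by simp
      have lastn: "last xs = xs ! (n - 1)" "hd xs = xs ! 0" using ne n_def by (auto simp: last_conv_nth hd_conv_nth)
      have ew: "{xs ! j, xs ! Suc j} \<in> edges G" if "Suc j < n" for j using w1(1) that n_def unfolding walk_def by simp
      define j1 where "j1 = (if i = 0 then n - 1 else i - 1)"
      define j2 where "j2 = (if i = n - 1 then 0 else i + 1)"
      have e1: "{x, xs ! j1} \<in> edges G"
      proof (cases "i = 0")
        case True then show ?thesis using w1(4) lastn i by (simp add: j1_def insert_commute)
      next
        case False then have "Suc (i - 1) < n" "Suc (i - 1) = i" using i by auto
        then show ?thesis using ew[of "i - 1"] i False by (simp add: j1_def insert_commute)
      qed
      have e2: "{x, xs ! j2} \<in> edges G"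
      proof (cases "i = n - 1")
        case True then show ?thesis using w1(4) lastn i by (simp add: j2_def)
      next
        case False then have "Suc i < n" using i by auto
        then show ?thesis using ew[of i] i False by (simp add: j2_def)
      qed
      have "xs ! j1 = xs ! j2" using xnb[OF e1] xnb[OF e2] by simp
      moreover have "j1 < n" "j2 < n" using i n3 by (auto simp: j1_def j2_def)
      moreover have "j1 \<noteq> j2" using i n3 by (auto simp: j1_def j2_def)
      ultimately show False using w1(3) n_def by (simp add: nth_eq_iff_index_eq)
    qed
  qed
  show ?thesis using g conn nc G by (simp add: tree_def)
qed

lemma tree_dist: "tree T \<Longrightarrow> u \<in> verts T \<Longrightarrow> v \<in> verts T \<Longrightarrow> dist T u v = enat (nd T u v)"
  by (rule conn_dist[OF tree_conn])

lemma union_tree_aux: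
  assumes tA: "tree A"
  shows "tree B \<Longrightarrow> card (verts B - verts A) = n \<Longrightarrow>
    (\<forall>u\<in>verts A. \<forall>v\<in>verts A. dist A u v = dist (gunion A B) u v) \<Longrightarrow>
    (\<forall>u\<in>verts B. \<forall>v\<in>verts B. dist B u v = dist (gunion A B) u v) \<Longrightarrow>
    verts A \<inter> verts B \<noteq> {} \<Longrightarrow>
    \<not>(\<exists>x\<in>verts B - verts A. \<exists>y\<in>verts A - verts B. \<forall>b\<in>verts A \<inter> verts B. dist A y b = dist B x b) \<Longrightarrow>
    tree (gunion A B)"
proof (induction n arbitrary: B)
  case 0
  show ?case
  proof -
    have tB: "tree B" and cd: "card (verts B - verts A) = 0"
      and hA: "\<forall>u\<in>verts A. \<forall>v\<in>verts A. dist A u v = dist (gunion A B) u v"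
      and hB: "\<forall>u\<in>verts B. \<forall>v\<in>verts B. dist B u v = dist (gunion A B) u v" using "0.prems" by auto
    have finB: "finite (verts B)" using tB by (simp add: tree_def graph_def)
    have "verts B - verts A = {}" using cd finB by simp
    then have VB: "verts B \<subseteq> verts A" by blast
    have EB: "edges B \<subseteq> edges A"
    proof
      fix e assume e: "e \<in> edges B"
      obtain c d where cd: "e = {c,d}" "c \<in> verts B" "d \<in> verts B"
        using edge_pair[OF tree_graph[OF tB] e] by blast
      have "nd B c d = 1" using nd_edge[OF tree_conn[OF tB] tree_graph[OF tB]] e cd by simp
      then have "dist B c d = 1" using tree_dist[OF tB cd(2,3)] by (simp add: one_enat_def)
      moreover have "c \<in> verts A" "d \<in> verts A" using VB cd by auto
      ultimately have "dist A c d = 1" using hA hB cd by simp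
      then show "e \<in> edges A" using dist_one[of A c d] cd by simp
    qed
    have "gunion A B = (verts A, edges A)" using VB EB by (simp add: gunion_def Un_absorb2)
    also have "\<dots> = A" by (simp add: verts_def edges_def)
    finally show "tree (gunion A B)" using tA by simp
  qed
next
  case (Suc n)
  show ?case
  proof -
    note P = Suc.prems
    have tB: "tree B" and cd: "card (verts B - verts A) = Suc n"
      and hA: "\<forall>u\<in>verts A. \<forall>v\<in>verts A. dist A u v = dist (gunion A B) u v"
      and hB: "\<forall>u\<in>verts B. \<forall>v\<in>verts B. dist B u v = dist (gunion A B) u v"
      and hI: "verts A \<inter> verts B \<noteq> {}"
      and np: "\<not>(\<exists>x\<in>verts B - verts A. \<exists>y\<in>verts A - verts B. \<forall>b\<in>verts A \<inter> verts B. dist A y b = dist B x b)"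
      using P(1) apply assumption using P(2) apply assumption using P(3) apply assumption
      using P(4) apply assumption using P(5) apply assumption using P(6) apply assumption done
    have gA: "graph A" and cA: "connected A" using tA by (auto simp: tree_def)
    have gB: "graph B" and cB: "connected B" using tB by (auto simp: tree_def)
    have finB: "finite (verts B)" using gB by (simp add: graph_def)
    have eqI: "nd A a b = nd B a b" if "a \<in> verts A \<inter> verts B" "b \<in> verts A \<inter> verts B" for a b
    proof -
      have "dist A a b = dist B a b" using hA hB that by auto
      then show ?thesis using tree_dist[OF tA] tree_dist[OF tB] that by auto
    qed
    obtain a where a: "a \<in> verts A" "a \<in> verts B" using hI by blast
    define S where "S = verts B - verts A"
    have finS: "finite S" using finB by (simp add: S_def)
    have neS: "S \<noteq> {}"
    proof
      assume e: "S = {}"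
      have "card S = 0" by (subst e) simp
      then show False using cd by (simp add: S_def)
    qed
    have "Max (nd B a ` S) \<in> nd B a ` S" using finS neS by simp
    then obtain x where xS: "x \<in> S" and xM: "Max (nd B a ` S) = nd B a x" by blast
    have mx: "nd B a z \<le> nd B a x" if "z \<in> S" for z
    proof -
      have "nd B a z \<le> Max (nd B a ` S)" using finS that by simp
      then show ?thesis using xM by simp
    qed
    have xv: "x \<in> verts B" "x \<notin> verts A" using xS by (auto simp: S_def)
    have "nd B x a \<noteq> 0" using nd_0[OF cB xv(1) a(2)] xv(2) a(1) by blast
    then obtain w0 where w0: "w0 \<in> verts B" "nd B x w0 = 1" "nd B w0 a = nd B x a - 1"
      using geo_point[OF cB xv(1) a(2), of 1] by auto
    have ew0: "{x,w0} \<in> edges B" using nd_one[OF cB xv(1) w0(1) w0(2)] .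
    have d0: "nd B a w0 + 1 = nd B a x" using w0(3) \<open>nd B x a \<noteq> 0\<close> nd_sym[of B a w0] nd_sym[of B a x] by simp
    have leafx: "\<forall>z. {x,z} \<in> edges B \<longrightarrow> z = w0"
    proof (intro allI impI)
      fix z assume ez: "{x,z} \<in> edges B"
      show "z = w0"
      proof (rule ccontr)
        assume zw: "z \<noteq> w0"
        have zv: "z \<in> verts B" using graph_edge[OF gB ez] by simp
        have "nd B a z + 1 \<noteq> nd B a x"
        proof
          assume "nd B a z + 1 = nd B a x"
          then have "w0 = z" using tree_U2[OF tB, rule_format, OF ew0 ez a(2) d0] by blast
          then show False using zw by simp
        qed
        then have dz: "nd B a z = nd B a x + 1" using tree_U[OF tB, rule_format, OF ez a(2)] by linarith
        have zA: "z \<in> verts A"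
        proof (rule ccontr)
          assume "z \<notin> verts A"
          then have "z \<in> S" using zv by (simp add: S_def)
          then have "nd B a z \<le> nd B a x" by (rule mx)
          then show False using dz by simp
        qed
        define s where "s = nd B a x"
        have aI: "a \<in> verts A \<inter> verts B" and zI: "z \<in> verts A \<inter> verts B" using a zA zv by auto
        have Daz: "nd A a z = s + 1" using eqI[OF aI zI] dz s_def by simp
        obtain y where y: "y \<in> verts A" "nd A a y = s" "nd A y z = nd A a z - s"
          using geo_point[OF cA a(1) zA, of s] Daz by auto
        have y1: "nd A y z = 1" using y(3) Daz by simp
        have xz1: "nd B x z = 1" using nd_edge[OF cB gB ez] .
        have prof: "nd A y b = nd B x b" if b: "b \<in> verts A \<inter> verts B" for b
        proof -
          have p1: "int (nd A y b) = max (int (nd A a b) - int (nd A a y)) (int (nd A z b) - int (nd A y z))"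
            by (rule profile[OF tA a(1) y(1) zA]) (use b y Daz y1 in auto)
          have p2: "int (nd B x b) = max (int (nd B a b) - int (nd B a x)) (int (nd B z b) - int (nd B x z))"
            by (rule profile[OF tB a(2) xv(1) zv]) (use b dz xz1 in auto)
          have "nd A a b = nd B a b" "nd A z b = nd B z b" using eqI aI zI b by auto
          then have "int (nd A y b) = int (nd B x b)" using p1 p2 y(2) y1 xz1 s_def by simp
          then show ?thesis by simp
        qed
        have yB: "y \<notin> verts B"
        proof
          assume "y \<in> verts B"
          then have "nd A y y = nd B x y" using prof y(1) by blast
          then have "nd B x y = 0" using nd_self[OF y(1)] by simp
          then have "x = y" using nd_0[OF cB xv(1) \<open>y \<in> verts B\<close>] by simp
          then show False using xv y(1) by simp
        qed
        have "\<forall>b\<in>verts A \<inter> verts B. dist A y b = dist B x b"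
          using prof tree_dist[OF tA] tree_dist[OF tB] y(1) xv(1) by auto
        then show False using np xv y(1) yB by blast
      qed
    qed
    note F = leaf_facts[OF tB xv(1) ew0 leafx]
    let ?B' = "rem x B"
    let ?U = "gunion A B"
    let ?U' = "gunion A ?B'"
    have tB': "tree ?B'" using F by blast
    have dB': "dist ?B' u v = dist B u v" if "u \<in> verts B - {x}" "v \<in> verts B - {x}" for u v
      using tree_dist[OF tB'] tree_dist[OF tB] F(4)[OF that] that by auto
    have hA': "\<forall>u\<in>verts A. \<forall>v\<in>verts A. dist A u v = dist ?U' u v"
    proof (intro ballI)
      fix u v assume uv: "u \<in> verts A" "v \<in> verts A"
      have "dist ?U' u v \<le> dist A u v" by (rule dist_mono) auto
      moreover have "dist ?U u v \<le> dist ?U' u v" by (rule dist_mono) auto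
      ultimately show "dist A u v = dist ?U' u v" using hA uv by (metis antisym)
    qed
    have hB': "\<forall>u\<in>verts ?B'. \<forall>v\<in>verts ?B'. dist ?B' u v = dist ?U' u v"
    proof (intro ballI)
      fix u v assume uv: "u \<in> verts ?B'" "v \<in> verts ?B'"
      have "dist ?U' u v \<le> dist ?B' u v" by (rule dist_mono) auto
      moreover have "dist ?U u v \<le> dist ?U' u v" by (rule dist_mono) auto
      moreover have "dist ?B' u v = dist ?U u v" using dB' uv hB by auto
      ultimately show "dist ?B' u v = dist ?U' u v" by (metis antisym)
    qed
    have II: "verts A \<inter> verts ?B' = verts A \<inter> verts B" using xv by auto
    have hI': "verts A \<inter> verts ?B' \<noteq> {}" using II hI by simp
    have np': "\<not>(\<exists>x'\<in>verts ?B' - verts A. \<exists>y\<in>verts A - verts ?B'. \<forall>b\<in>verts A \<inter> verts ?B'. dist A y b = dist ?B' x' b)"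
    proof
      assume "\<exists>x'\<in>verts ?B' - verts A. \<exists>y\<in>verts A - verts ?B'. \<forall>b\<in>verts A \<inter> verts ?B'. dist A y b = dist ?B' x' b"
      then obtain x' y where x': "x' \<in> verts ?B' - verts A" and y: "y \<in> verts A - verts ?B'"
        and pr: "\<forall>b\<in>verts A \<inter> verts ?B'. dist A y b = dist ?B' x' b" by blast
      have "y \<notin> verts B" using y xv by auto
      moreover have "\<forall>b\<in>verts A \<inter> verts B. dist A y b = dist B x' b"
      proof
        fix b assume b: "b \<in> verts A \<inter> verts B"
        have "b \<in> verts B - {x}" using b xv by auto
        then show "dist A y b = dist B x' b" using pr II b dB' x' by auto
      qed
      ultimately show False using np x' y by auto
    qed
    have "verts ?B' - verts A = (verts B - verts A) - {x}" by auto
    moreover have "card ((verts B - verts A) - {x}) = card (verts B - verts A) - 1"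
      using xS finB by (intro card_Diff_singleton) (auto simp: S_def)
    ultimately have cd': "card (verts ?B' - verts A) = n" using cd by simp
    have tU': "tree ?U'" by (rule Suc.IH[OF tB' cd' hA' hB' hI' np'])
    have w0x: "w0 \<noteq> x" using graph_edge[OF gB ew0] by auto
    show "tree ?U"
    proof (rule add_leaf[OF tU', of x w0])
      show "x \<notin> verts ?U'" using xv by simp
      show "w0 \<in> verts ?U'" using w0 w0x by simp
      show "verts ?U = insert x (verts ?U')" using xv by auto
      have "edges B = insert {x,w0} {e \<in> edges B. x \<notin> e}"
      proof
        show "edges B \<subseteq> insert {x,w0} {e \<in> edges B. x \<notin> e}"
        proof
          fix e assume e: "e \<in> edges B"
          show "e \<in> insert {x,w0} {e \<in> edges B. x \<notin> e}"
          proof (cases "x \<in> e")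
            case True
            obtain c d where cd: "e = {c,d}" using edge_pair[OF gB e] by blast
            show ?thesis
            proof (cases "x = c")
              case True
              then have "{x,d} \<in> edges B" using e cd by simp
              then have "d = w0" using leafx by blast
              then show ?thesis using cd True by simp
            next
              case False then have "x = d" using \<open>x \<in> e\<close> cd by auto
              then have "e = {x,c}" using cd by (simp add: insert_commute)
              moreover then have "c = w0" using leafx e by blast
              ultimately show ?thesis by simp
            qed
          qed (use e in auto)
        qed
        show "insert {x,w0} {e \<in> edges B. x \<notin> e} \<subseteq> edges B" using ew0 by auto
      qed
      then have "edges A \<union> edges B = insert {x,w0} (edges A \<union> {e \<in> edges B. x \<notin> e})"
        by (metis Un_insert_right)
      then show "edges ?U = insert {x,w0} (edges ?U')" by simp
    qed
  qed
qed

lemma union_tree: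
  assumes "tree A" "tree B"
    "\<forall>u\<in>verts A. \<forall>v\<in>verts A. dist A u v = dist (gunion A B) u v"
    "\<forall>u\<in>verts B. \<forall>v\<in>verts B. dist B u v = dist (gunion A B) u v"
    "verts A \<inter> verts B \<noteq> {}"
    "\<not>(\<exists>x\<in>verts B - verts A. \<exists>y\<in>verts A - verts B. \<forall>b\<in>verts A \<inter> verts B. dist A y b = dist B x b)"
  shows "tree (gunion A B)"
  by (rule union_tree_aux[OF assms(1) assms(2) refl assms(3) assms(4) assms(5) assms(6)])

lemma merge:
  assumes t1: "tree H1" and t2: "tree H2"
    and i1: "\<forall>u\<in>verts H1. \<forall>v\<in>verts H1. dist H1 u v = dist (gunion H1 H2) u v"
    and i2: "\<forall>u\<in>verts H2. \<forall>v\<in>verts H2. dist H2 u v = dist (gunion H1 H2) u v"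
    and x: "x \<in> verts H2" "x \<notin> verts H1" and y: "y \<in> verts H1" "y \<notin> verts H2"
    and pr: "\<forall>b\<in>verts H1 \<inter> verts H2. dist H1 y b = dist H2 x b"
  shows "\<exists>W q. graph W \<and> isometric_subgraph H1 W \<and> inj_on q (verts H2) \<and>
     isometric_subgraph (gmap q H2) W \<and> card (verts W) < card (verts H1 \<union> verts H2)"
proof -
  have g1: "graph H1" and c1: "connected H1" using t1 by (auto simp: tree_def)
  have g2: "graph H2" and c2: "connected H2" using t2 by (auto simp: tree_def)
  let ?I = "verts H1 \<inter> verts H2"
  have eqI: "nd H1 a b = nd H2 a b" if "a \<in> ?I" "b \<in> ?I" for a b
  proof -
    have "dist H1 a b = dist H2 a b" using i1 i2 that by auto
    then show ?thesis using tree_dist[OF t1] tree_dist[OF t2] that by auto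
  qed
  have prn: "nd H1 y b = nd H2 x b" if "b \<in> ?I" for b
  proof -
    have "dist H1 y b = dist H2 x b" using pr that by auto
    then show ?thesis using tree_dist[OF t1 y(1)] tree_dist[OF t2 x(1)] that by auto
  qed
  define q where "q z = (if z = x then y else z)" for z
  have ex1: "\<exists>g. (\<forall>a\<in>insert x ?I. g a = q a) \<and> (\<forall>z\<in>verts H2. g z \<in> verts H1) \<and>
      (\<forall>u\<in>verts H2. \<forall>v\<in>verts H2. nd H1 (g u) (g v) \<le> nd H2 u v)"
  proof (rule extension[OF t2 t1])
    show "insert x ?I \<subseteq> verts H2" using x by auto
    show "\<forall>a\<in>insert x ?I. q a \<in> verts H1" using y by (auto simp: q_def)
    show "\<forall>a\<in>insert x ?I. \<forall>b\<in>insert x ?I. nd H1 (q a) (q b) \<le> nd H2 a b"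
    proof (intro ballI)
      fix a b assume a: "a \<in> insert x ?I" and b: "b \<in> insert x ?I"
      show "nd H1 (q a) (q b) \<le> nd H2 a b"
      proof (cases "a = x")
        case True
        show ?thesis
        proof (cases "b = x")
          case True then show ?thesis using \<open>a = x\<close> nd_self[OF y(1)] by (simp add: q_def)
        next
          case False
          then have "b \<in> ?I" "q b = b" using b by (auto simp: q_def)
          then show ?thesis using True prn[of b] by (simp add: q_def)
        qed
      next
        case False
        then have aI: "a \<in> ?I" and qa: "q a = a" using a by (auto simp: q_def)
        show ?thesis
        proof (cases "b = x")
          case True then show ?thesis using aI qa prn[of a] nd_sym[of H1 a y] nd_sym[of H2 a x] by (simp add: q_def)
        next
          case False
          then have "b \<in> ?I" "q b = b" using b by (auto simp: q_def)
          then show ?thesis using aI qa eqI by simp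
        qed
      qed
    qed
  qed
  then obtain g where gA: "\<forall>a\<in>insert x ?I. g a = q a" and gv: "\<forall>z\<in>verts H2. g z \<in> verts H1"
    and gl: "\<forall>u\<in>verts H2. \<forall>v\<in>verts H2. nd H1 (g u) (g v) \<le> nd H2 u v" by blast
  define p where "p z = (if z = y then x else z)" for z
  have ex2: "\<exists>h. (\<forall>a\<in>insert y ?I. h a = p a) \<and> (\<forall>z\<in>verts H1. h z \<in> verts H2) \<and>
      (\<forall>u\<in>verts H1. \<forall>v\<in>verts H1. nd H2 (h u) (h v) \<le> nd H1 u v)"
  proof (rule extension[OF t1 t2])
    show "insert y ?I \<subseteq> verts H1" using y by auto
    show "\<forall>a\<in>insert y ?I. p a \<in> verts H2" using x by (auto simp: p_def)
    show "\<forall>a\<in>insert y ?I. \<forall>b\<in>insert y ?I. nd H2 (p a) (p b) \<le> nd H1 a b"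
    proof (intro ballI)
      fix a b assume a: "a \<in> insert y ?I" and b: "b \<in> insert y ?I"
      show "nd H2 (p a) (p b) \<le> nd H1 a b"
      proof (cases "a = y")
        case True
        show ?thesis
        proof (cases "b = y")
          case True then show ?thesis using \<open>a = y\<close> nd_self[OF x(1)] by (simp add: p_def)
        next
          case False
          then have "b \<in> ?I" "p b = b" using b by (auto simp: p_def)
          then show ?thesis using True prn[of b] by (simp add: p_def)
        qed
      next
        case False
        then have aI: "a \<in> ?I" and pa: "p a = a" using a by (auto simp: p_def)
        show ?thesis
        proof (cases "b = y")
          case True then show ?thesis using aI pa prn[of a] nd_sym[of H1 a y] nd_sym[of H2 a x] by (simp add: p_def)
        next
          case False
          then have "b \<in> ?I" "p b = b" using b by (auto simp: p_def)
          then show ?thesis using aI pa eqI by simp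
        qed
      qed
    qed
  qed
  then obtain h where hA: "\<forall>a\<in>insert y ?I. h a = p a" and hv: "\<forall>z\<in>verts H1. h z \<in> verts H2"
    and hl: "\<forall>u\<in>verts H1. \<forall>v\<in>verts H1. nd H2 (h u) (h v) \<le> nd H1 u v" by blast
  have inj: "inj_on q (verts H2)" unfolding inj_on_def q_def using y(2) by auto
  define Q where "Q = gmap q H2"
  define W where "W = gunion H1 Q"
  have gQ: "graph Q" unfolding Q_def by (rule graph_gmap[OF g2 inj])
  have gW: "graph W" unfolding W_def by (rule graph_gunion[OF g1 gQ])
  have VW: "verts W = verts H1 \<union> q ` verts H2" by (simp add: W_def Q_def)
  have EW: "edges W = edges H1 \<union> (\<lambda>e. q ` e) ` edges H2" by (simp add: W_def Q_def)
  define r1 where "r1 z = (if z \<in> verts H1 then z else g z)" for z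
  have key1: "r1 (q c) = g c" if c: "c \<in> verts H2" for c
  proof (cases "c = x")
    case True then show ?thesis using y gA by (simp add: r1_def q_def)
  next
    case False
    show ?thesis
    proof (cases "c \<in> verts H1")
      case True then have "g c = q c" using gA c by auto
      then show ?thesis using True False by (simp add: r1_def q_def)
    next
      case F2: False then show ?thesis using False by (simp add: r1_def q_def)
    qed
  qed
  have iso1: "isometric_subgraph H1 W"
    unfolding isometric_subgraph_def subgraph_def
  proof (intro conjI ballI)
    show "graph H1" "graph W" by (fact g1) (fact gW)
    show "verts H1 \<subseteq> verts W" "edges H1 \<subseteq> edges W" by (auto simp: VW EW)
    fix u v assume uv: "u \<in> verts H1" "v \<in> verts H1"
    have le: "dist W u v \<le> dist H1 u v" by (rule dist_mono) (auto simp: VW EW)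
    have "dist H1 (r1 u) (r1 v) \<le> dist W u v"
    proof (rule dist_nonexp[OF _ _ g1])
      show "r1 z \<in> verts H1" if zW: "z \<in> verts W" for z
      proof (cases "z \<in> verts H1")
        case True then show ?thesis by (simp add: r1_def)
      next
        case False
        then obtain c where "c \<in> verts H2" "z = q c" using zW VW by auto
        then show ?thesis using key1 gv by auto
      qed
      show "r1 a = r1 b \<or> {r1 a, r1 b} \<in> edges H1" if e: "{a,b} \<in> edges W" for a b
      proof (cases "{a,b} \<in> edges H1")
        case True
        then have "a \<in> verts H1" "b \<in> verts H1" using graph_edge[OF g1] by auto
        then show ?thesis using True by (simp add: r1_def)
      next
        case False
        then obtain e where e2: "e \<in> edges H2" "{a,b} = q ` e" using e EW by auto
        obtain c d where cd: "e = {c,d}" "c \<in> verts H2" "d \<in> verts H2" using edge_pair[OF g2 e2(1)] by blast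
        have ab: "(a = q c \<and> b = q d) \<or> (a = q d \<and> b = q c)" using e2(2) cd by (simp add: doubleton_eq_iff)
        have "nd H2 c d = 1" using nd_edge[OF c2 g2] e2(1) cd by simp
        then have le1: "nd H1 (g c) (g d) \<le> 1" using gl cd by fastforce
        have gcd: "g c \<in> verts H1" "g d \<in> verts H1" using gv cd by auto
        have "g c = g d \<or> {g c, g d} \<in> edges H1"
        proof (cases "nd H1 (g c) (g d) = 0")
          case True then show ?thesis using nd_0[OF c1 gcd] by blast
        next
          case False then have "nd H1 (g c) (g d) = 1" using le1 by simp
          then show ?thesis using nd_one[OF c1 gcd] by blast
        qed
        then show ?thesis using ab key1[OF cd(2)] key1[OF cd(3)] by (auto simp: insert_commute)
      qed
    qed
    then have "dist H1 u v \<le> dist W u v" using uv by (simp add: r1_def)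
    then show "dist H1 u v = dist W u v" using le by (rule antisym)
  qed
  define r2 where "r2 z = (if z \<in> verts H1 then q (h z) else z)" for z
  have key2: "r2 (q c) = q c" if c: "c \<in> verts H2" for c
  proof (cases "c = x")
    case True then show ?thesis using y hA by (simp add: r2_def q_def p_def)
  next
    case False
    show ?thesis
    proof (cases "c \<in> verts H1")
      case True then have "h c = p c" using hA c by auto
      then show ?thesis using True False c y(2) by (auto simp: r2_def q_def p_def)
    next
      case F2: False then show ?thesis using False by (simp add: r2_def q_def)
    qed
  qed
  have iso2: "isometric_subgraph Q W"
    unfolding isometric_subgraph_def subgraph_def
  proof (intro conjI ballI)
    show "graph Q" "graph W" by (fact gQ) (fact gW)
    show "verts Q \<subseteq> verts W" "edges Q \<subseteq> edges W" by (auto simp: VW EW Q_def)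
    fix u v assume uv: "u \<in> verts Q" "v \<in> verts Q"
    have le: "dist W u v \<le> dist Q u v" by (rule dist_mono) (auto simp: VW EW Q_def)
    have "dist Q (r2 u) (r2 v) \<le> dist W u v"
    proof (rule dist_nonexp[OF _ _ gQ])
      show "r2 z \<in> verts Q" if zW: "z \<in> verts W" for z
      proof (cases "z \<in> verts H1")
        case True then show ?thesis using hv by (simp add: r2_def Q_def)
      next
        case False
        then obtain c where "c \<in> verts H2" "z = q c" using zW VW by auto
        then show ?thesis using key2 by (simp add: Q_def)
      qed
      show "r2 a = r2 b \<or> {r2 a, r2 b} \<in> edges Q" if e: "{a,b} \<in> edges W" for a b
      proof (cases "{a,b} \<in> edges H1")
        case True
        then have ab: "a \<in> verts H1" "b \<in> verts H1" using graph_edge[OF g1] by auto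
        have "nd H1 a b = 1" using nd_edge[OF c1 g1] True by simp
        then have le1: "nd H2 (h a) (h b) \<le> 1" using hl ab by fastforce
        have hab: "h a \<in> verts H2" "h b \<in> verts H2" using hv ab by auto
        have "h a = h b \<or> {h a, h b} \<in> edges H2"
        proof (cases "nd H2 (h a) (h b) = 0")
          case True then show ?thesis using nd_0[OF c2 hab] by blast
        next
          case False then have "nd H2 (h a) (h b) = 1" using le1 by simp
          then show ?thesis using nd_one[OF c2 hab] by blast
        qed
        then show ?thesis
        proof
          assume "h a = h b" then show ?thesis using ab by (simp add: r2_def)
        next
          assume "{h a, h b} \<in> edges H2"
          then have "q ` {h a, h b} \<in> (\<lambda>e. q ` e) ` edges H2" by (rule imageI)
          then show ?thesis using ab by (simp add: r2_def Q_def)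
        qed
      next
        case False
        then obtain e where e2: "e \<in> edges H2" "{a,b} = q ` e" using e EW by auto
        obtain c d where cd: "e = {c,d}" "c \<in> verts H2" "d \<in> verts H2" using edge_pair[OF g2 e2(1)] by blast
        have ab: "(a = q c \<and> b = q d) \<or> (a = q d \<and> b = q c)" using e2(2) cd by (simp add: doubleton_eq_iff)
        have "r2 a = a" "r2 b = b" using ab key2[OF cd(2)] key2[OF cd(3)] by auto
        moreover have "{a,b} \<in> edges Q" using e2 by (simp add: Q_def)
        ultimately show ?thesis by simp
      qed
    qed
    moreover have "r2 u = u" "r2 v = v" using uv key2 by (auto simp: Q_def)
    ultimately have "dist Q u v \<le> dist W u v" by simp
    then show "dist Q u v = dist W u v" using le by (rule antisym)
  qed
  have card: "card (verts W) < card (verts H1 \<union> verts H2)"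
  proof -
    have fin: "finite (verts H1 \<union> verts H2)" using g1 g2 by (simp add: graph_def)
    have "verts W \<subseteq> (verts H1 \<union> verts H2) - {x}" using x y by (auto simp: VW q_def)
    then have "card (verts W) \<le> card ((verts H1 \<union> verts H2) - {x})" using fin by (intro card_mono) auto
    also have "\<dots> < card (verts H1 \<union> verts H2)" using fin x by (intro card_Diff1_less) auto
    finally show ?thesis .
  qed
  show ?thesis using gW iso1 inj iso2 card unfolding Q_def by blast
qed

lemma nat_copy:
  assumes u: "isometric_universal F W"
  shows "\<exists>W' :: nat graph. isometric_universal F W' \<and> card (verts W') = card (verts W)"
proof -
  have gW: "graph W" using u by (simp add: isometric_universal_def)
  have fin: "finite (verts W)" using gW by (simp add: graph_def)
  obtain h n where "h ` verts W = {i::nat. i < n}" "inj_on h (verts W)"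
    using finite_imp_inj_to_nat_seg[OF fin] by blast
  then have inj: "inj_on h (verts W)" by simp
  define W' where "W' = gmap h W"
  have gW': "graph W'" unfolding W'_def by (rule graph_gmap[OF gW inj])
  have "isometric_universal F W'"
    unfolding isometric_universal_def
  proof (intro conjI ballI)
    show "graph W'" by (fact gW')
    fix G assume G: "G \<in> F"
    then obtain H where iH: "isometric_subgraph H W" and isoH: "isomorphic G H"
      using u by (auto simp: isometric_universal_def)
    obtain f where f: "graph_iso G H f" using isoH by (auto simp: isomorphic_def)
    have sH: "subgraph H W" using iH by (simp add: isometric_subgraph_def)
    have gH: "graph H" and VH: "verts H \<subseteq> verts W" and EH: "edges H \<subseteq> edges W"
      using sH by (auto simp: subgraph_def)
    have injH: "inj_on h (verts H)" using inj VH by (rule inj_on_subset)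
    have "isometric_subgraph (gmap h H) W'"
      unfolding isometric_subgraph_def subgraph_def
    proof (intro conjI ballI)
      show "graph (gmap h H)" by (rule graph_gmap[OF gH injH])
      show "graph W'" by (fact gW')
      show "verts (gmap h H) \<subseteq> verts W'" using VH by (auto simp: W'_def)
      show "edges (gmap h H) \<subseteq> edges W'" using EH by (auto simp: W'_def)
      fix u' v' assume "u' \<in> verts (gmap h H)" "v' \<in> verts (gmap h H)"
      then obtain u v where uv: "u \<in> verts H" "v \<in> verts H" "u' = h u" "v' = h v" by auto
      have e1: "dist (gmap h H) (h u) (h v) = dist H u v" by (rule dist_gmap[OF gH injH uv(1,2)])
      have e2: "dist H u v = dist W u v" using iH uv by (simp add: isometric_subgraph_def)
      have uW: "u \<in> verts W" "v \<in> verts W" using uv VH by auto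
      have e3: "dist W u v = dist W' (h u) (h v)" unfolding W'_def by (rule dist_gmap[OF gW inj uW, symmetric])
      show "dist (gmap h H) u' v' = dist W' u' v'" using e1 e2 e3 uv by simp
    qed
    moreover have "isomorphic G (gmap h H)" unfolding isomorphic_def using iso_gmap[OF f gH injH] by blast
    ultimately show "\<exists>H. isometric_subgraph H W' \<and> isomorphic G H" by blast
  qed
  moreover have "card (verts W') = card (verts W)" using inj by (simp add: W'_def card_image)
  ultimately show ?thesis by blast
qed

theorem theorem2:
  fixes T1 T2 :: "'b graph" and U :: "'a graph"
  assumes "tree T1" and "tree T2"
    and "minimum_isometric_universal {T1, T2} U"
    and "minimal_isometric_universal {T1, T2} U"
  shows "tree U"
proof -
  note mn = assms(3) and ml = assms(4)
  have uU: "isometric_universal {T1,T2} U" using mn by (simp add: minimum_isometric_universal_def)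
  have gU: "graph U" using uU by (simp add: isometric_universal_def)
  obtain H1 where iH1: "isometric_subgraph H1 U" and "isomorphic T1 H1"
    using uU by (auto simp: isometric_universal_def)
  then obtain f1 where f1: "graph_iso T1 H1 f1" by (auto simp: isomorphic_def)
  obtain H2 where iH2: "isometric_subgraph H2 U" and "isomorphic T2 H2"
    using uU by (auto simp: isometric_universal_def)
  then obtain f2 where f2: "graph_iso T2 H2 f2" by (auto simp: isomorphic_def)
  have gH1: "graph H1" and V1: "verts H1 \<subseteq> verts U" and E1: "edges H1 \<subseteq> edges U"
    and d1: "\<forall>u\<in>verts H1. \<forall>v\<in>verts H1. dist H1 u v = dist U u v"
    using iH1 by (auto simp: isometric_subgraph_def subgraph_def)
  have gH2: "graph H2" and V2: "verts H2 \<subseteq> verts U" and E2: "edges H2 \<subseteq> edges U"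
    and d2: "\<forall>u\<in>verts H2. \<forall>v\<in>verts H2. dist H2 u v = dist U u v"
    using iH2 by (auto simp: isometric_subgraph_def subgraph_def)
  have tH1: "tree H1" by (rule iso_tree[OF f1 assms(1) gH1])
  have tH2: "tree H2" by (rule iso_tree[OF f2 assms(2) gH2])
  let ?H = "gunion H1 H2"
  have gH: "graph ?H" by (rule graph_gunion[OF gH1 gH2])
  have sH: "subgraph ?H U" unfolding subgraph_def using gH gU V1 V2 E1 E2 by auto
  have dH1: "\<forall>u\<in>verts H1. \<forall>v\<in>verts H1. dist H1 u v = dist ?H u v"
  proof (intro ballI)
    fix u v assume uv: "u \<in> verts H1" "v \<in> verts H1"
    have "dist U u v \<le> dist ?H u v" by (rule dist_mono) (use V1 V2 E1 E2 in auto)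
    moreover have "dist ?H u v \<le> dist H1 u v" by (rule dist_mono) auto
    ultimately show "dist H1 u v = dist ?H u v" using d1 uv by (metis antisym)
  qed
  have dH2: "\<forall>u\<in>verts H2. \<forall>v\<in>verts H2. dist H2 u v = dist ?H u v"
  proof (intro ballI)
    fix u v assume uv: "u \<in> verts H2" "v \<in> verts H2"
    have "dist U u v \<le> dist ?H u v" by (rule dist_mono) (use V1 V2 E1 E2 in auto)
    moreover have "dist ?H u v \<le> dist H2 u v" by (rule dist_mono) auto
    ultimately show "dist H2 u v = dist ?H u v" using d2 uv by (metis antisym)
  qed
  have i1H: "isometric_subgraph H1 ?H" unfolding isometric_subgraph_def subgraph_def
    using gH1 gH dH1 by auto
  have i2H: "isometric_subgraph H2 ?H" unfolding isometric_subgraph_def subgraph_def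
    using gH2 gH dH2 by auto
  have uH: "isometric_universal {T1,T2} ?H" unfolding isometric_universal_def
  proof (intro conjI ballI)
    show "graph ?H" by (fact gH)
    fix G assume "G \<in> {T1,T2}"
    then show "\<exists>H. isometric_subgraph H ?H \<and> isomorphic G H"
      using i1H i2H \<open>isomorphic T1 H1\<close> \<open>isomorphic T2 H2\<close> by blast
  qed
  have HU: "?H = U"
  proof (rule ccontr)
    assume "?H \<noteq> U"
    then have "\<exists>H. subgraph H U \<and> H \<noteq> U \<and> isometric_universal {T1, T2} H" using sH uH by blast
    then show False using ml unfolding minimal_isometric_universal_def by blast
  qed
  have np: "\<not>(\<exists>x\<in>verts H2 - verts H1. \<exists>y\<in>verts H1 - verts H2. \<forall>b\<in>verts H1 \<inter> verts H2. dist H1 y b = dist H2 x b)"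
  proof
    assume "\<exists>x\<in>verts H2 - verts H1. \<exists>y\<in>verts H1 - verts H2. \<forall>b\<in>verts H1 \<inter> verts H2. dist H1 y b = dist H2 x b"
    then obtain x y where x: "x \<in> verts H2" "x \<notin> verts H1" and y: "y \<in> verts H1" "y \<notin> verts H2"
      and pr: "\<forall>b\<in>verts H1 \<inter> verts H2. dist H1 y b = dist H2 x b" by blast
    obtain W q where gW: "graph W" and iso1: "isometric_subgraph H1 W" and inj: "inj_on q (verts H2)"
      and iso2: "isometric_subgraph (gmap q H2) W" and cW: "card (verts W) < card (verts H1 \<union> verts H2)"
      using merge[OF tH1 tH2 dH1 dH2 x y pr] by blast
    have "isomorphic T2 (gmap q H2)" unfolding isomorphic_def using iso_gmap[OF f2 gH2 inj] by blast
    have uW: "isometric_universal {T1,T2} W" unfolding isometric_universal_def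
    proof (intro conjI ballI)
      show "graph W" by (fact gW)
      fix G assume "G \<in> {T1,T2}"
      then show "\<exists>H. isometric_subgraph H W \<and> isomorphic G H"
        using iso1 iso2 \<open>isomorphic T1 H1\<close> \<open>isomorphic T2 (gmap q H2)\<close> by blast
    qed
    obtain W' :: "nat graph" where uW': "isometric_universal {T1,T2} W'" and cW': "card (verts W') = card (verts W)"
      using nat_copy[OF uW] by blast
    have "card (verts U) \<le> card (verts W')" using mn uW' unfolding minimum_isometric_universal_def by blast
    moreover have "verts U = verts H1 \<union> verts H2" using HU by (metis gunion_simps(1))
    ultimately show False using cW cW' by simp
  qed
  have ne: "verts H1 \<inter> verts H2 \<noteq> {}"
  proof
    assume e: "verts H1 \<inter> verts H2 = {}"
    obtain x where x: "x \<in> verts H2" using tH2 by (auto simp: tree_def)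
    obtain y where y: "y \<in> verts H1" using tH1 by (auto simp: tree_def)
    have "x \<notin> verts H1" "y \<notin> verts H2" using x y e by auto
    then show False using np x y e by blast
  qed
  have "tree ?H" by (rule union_tree[OF tH1 tH2 dH1 dH2 ne np])
  then show ?thesis using HU by simp
qed

end
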